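(* Every well-typed $\lambda\mu\mathrm{T}$-term is strongly normalizing: if $\Gamma;\Delta\vdash t:\rho$, then there is no infinite reduction sequence $t\to t_1\to t_2\to\cdots$.
   Context: The calculus $\lambda\mu\mathrm{T}$. Types: $\rho,\sigma,\tau ::= \mathbb{N} \mid \sigma\to\tau$. Over infinite sets of $\lambda$-variables $x,y,\dots$ and $\mu$-variables $\alpha,\beta,\gamma,\dots$, terms and commands are mutually defined by $t,r,s ::= x \mid \lambda x{:}\rho.r \mid t\,s \mid \mu\alpha{:}\rho.c \mid 0 \mid \mathsf{S}\,t \mid \mathsf{nrec}_\rho\ r\ s\ t$ and $c ::= [\alpha]t$ (type annotations often omitted). $\lambda x$ binds $x$, $\mu\alpha$ binds $\alpha$; terms are considered modulo renaming of bound variables; $FV(t)$, $FCV(t)$ are the free $\lambda$- and $\mu$-variables. $t[x:=r]$ is capture-avoiding substitution. Numerals: $\underline{n} := \mathsf{S}^n 0$. Contexts: $E ::= \Box \mid E\,t \mid \mathsf{S}\,E \mid \mathsf{nrec}\ r\ s\ E$; $E[u]$ is the result of filling the hole with $u$. Structural substitution $t[\alpha:=\beta E]$ ($\beta$ a $\mu$-variable, $E$ a context) is defined homomorphically on all constructs (capture-avoiding for both kinds of variables) except $([\alpha]u)[\alpha:=\beta E] := [\beta]E[u[\alpha:=\beta E]]$ (and $([\gamma]u)[\alpha:=\beta E]:=[\gamma](u[\alpha:=\beta E])$ for $\gamma\neq\alpha$). Typing judgments $\Gamma;\Delta\vdash t:\rho$ and $\Gamma;\Delta\vdash c$ ($\Gamma$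 assigns types to $\lambda$-variables, $\Delta$ to $\mu$-variables) are generated by: (var) $x:\rho\in\Gamma \Rightarrow \Gamma;\Delta\vdash x:\rho$; (lambda) $\Gamma,x:\sigma;\Delta\vdash t:\tau \Rightarrow \Gamma;\Delta\vdash\lambda x{:}\sigma.t:\sigma\to\tau$; (app) $\Gamma;\Delta\vdash t:\sigma\to\tau$ and $\Gamma;\Delta\vdash s:\sigma$ $\Rightarrow \Gamma;\Delta\vdash ts:\tau$; (zero) $\Gamma;\Delta\vdash 0:\mathbb{N}$; (suc) $\Gamma;\Delta\vdash t:\mathbb{N}\Rightarrow\Gamma;\Delta\vdash \mathsf{S}\,t:\mathbb{N}$; (nrec) $\Gamma;\Delta\vdash r:\rho$, $\Gamma;\Delta\vdash s:\mathbb{N}\to\rho\to\rho$, $\Gamma;\Delta\vdash t:\mathbb{N}$ $\Rightarrow \Gamma;\Delta\vdash\mathsf{nrec}_\rho\ r\ s\ t:\rho$; (activate) $\Gamma;\Delta,\alpha:\rho\vdash c\Rightarrow\Gamma;\Delta\vdash\mu\alpha{:}\rho.c:\rho$; (passivate) $\Gamma;\Delta\vdash t:\rho$ and $\alpha:\rho\in\Delta$ $\Rightarrow \Gamma;\Delta\vdash[\alpha]t$. Reduction $\to$ is the compatible closure (on terms and commands) of: ($\beta$) $(\lambda x.t)r\to t[x:=r]$; ($\mu\mathsf{S}$) $\mathsf{S}(\mu\alpha.c)\to\mu\alpha.c[\alpha:=\alpha(\mathsf{S}\,\Box)]$; ($\mu R$) $(\mu\alpha.c)s\to\mu\alpha.c[\alpha:=\alpha(\Box\,s)]$;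 ($\mu\eta$) $\mu\alpha.[\alpha]t\to t$ if $\alpha\notin FCV(t)$; ($\mu i$) $[\alpha]\mu\beta.c\to c[\beta:=\alpha\,\Box]$; ($0$) $\mathsf{nrec}\ r\ s\ 0\to r$; ($\mathsf{S}$) $\mathsf{nrec}\ r\ s\ (\mathsf{S}\,\underline{n})\to s\ \underline{n}\ (\mathsf{nrec}\ r\ s\ \underline{n})$; ($\mu\mathbb{N}$) $\mathsf{nrec}\ r\ s\ (\mu\alpha.c)\to\mu\alpha.c[\alpha:=\alpha(\mathsf{nrec}\ r\ s\ \Box)]$. *)

theory Defs
  imports Main
begin

text \<open>The calculus lambda-mu-T, in de Bruijn representation (terms modulo
renaming of bound variables).  lambda-variables and mu-variables live in two
separate index spaces: Lam binds lambda-index 0, Mu binds mu-index 0.\<close>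

datatype ty = Nat | Arr ty ty

datatype trm =
    Var nat
  | Lam ty trm
  | App trm trm
  | Mu ty cmd
  | Zero
  | Sc trm
  | Nrec ty trm trm trm
and cmd = Pass nat trm

datatype ctx = Hole | CApp ctx trm | CSc ctx | CNrec ty trm trm ctx

fun num :: "nat \<Rightarrow> trm" where
  "num 0 = Zero"
| "num (Suc n) = Sc (num n)"

definition ext :: "(nat \<Rightarrow> nat) \<Rightarrow> nat \<Rightarrow> nat" where
  "ext f i = (case i of 0 \<Rightarrow> 0 | Suc j \<Rightarrow> Suc (f j))"

fun lren :: "(nat \<Rightarrow> nat) \<Rightarrow> trm \<Rightarrow> trm"
and lrenc :: "(nat \<Rightarrow> nat) \<Rightarrow> cmd \<Rightarrow> cmd" where
  "lren f (Var x) = Var (f x)"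
| "lren f (Lam T t) = Lam T (lren (ext f) t)"
| "lren f (App t s) = App (lren f t) (lren f s)"
| "lren f (Mu T c) = Mu T (lrenc f c)"
| "lren f Zero = Zero"
| "lren f (Sc t) = Sc (lren f t)"
| "lren f (Nrec T r s t) = Nrec T (lren f r) (lren f s) (lren f t)"
| "lrenc f (Pass a t) = Pass a (lren f t)"

fun mren :: "(nat \<Rightarrow> nat) \<Rightarrow> trm \<Rightarrow> trm"
and mrenc :: "(nat \<Rightarrow> nat) \<Rightarrow> cmd \<Rightarrow> cmd" where
  "mren f (Var x) = Var x"
| "mren f (Lam T t) = Lam T (mren f t)"
| "mren f (App t s) = App (mren f t) (mren f s)"
| "mren f (Mu T c) = Mu T (mrenc (ext f) c)"
| "mren f Zero = Zero"
| "mren f (Sc t) = Sc (mren f t)"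
| "mren f (Nrec T r s t) = Nrec T (mren f r) (mren f s) (mren f t)"
| "mrenc f (Pass a t) = Pass (f a) (mren f t)"

fun lren_ctx :: "(nat \<Rightarrow> nat) \<Rightarrow> ctx \<Rightarrow> ctx" where
  "lren_ctx f Hole = Hole"
| "lren_ctx f (CApp E t) = CApp (lren_ctx f E) (lren f t)"
| "lren_ctx f (CSc E) = CSc (lren_ctx f E)"
| "lren_ctx f (CNrec T r s E) = CNrec T (lren f r) (lren f s) (lren_ctx f E)"

fun mren_ctx :: "(nat \<Rightarrow> nat) \<Rightarrow> ctx \<Rightarrow> ctx" where
  "mren_ctx f Hole = Hole"
| "mren_ctx f (CApp E t) = CApp (mren_ctx f E) (mren f t)"
| "mren_ctx f (CSc E) = CSc (mren_ctx f E)"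
| "mren_ctx f (CNrec T r s E) = CNrec T (mren f r) (mren f s) (mren_ctx f E)"

fun fill :: "ctx \<Rightarrow> trm \<Rightarrow> trm" where
  "fill Hole u = u"
| "fill (CApp E t) u = App (fill E u) t"
| "fill (CSc E) u = Sc (fill E u)"
| "fill (CNrec T r s E) u = Nrec T r s (fill E u)"

fun lsubst :: "(nat \<Rightarrow> trm) \<Rightarrow> trm \<Rightarrow> trm"
and lsubstc :: "(nat \<Rightarrow> trm) \<Rightarrow> cmd \<Rightarrow> cmd" where
  "lsubst \<sigma> (Var x) = \<sigma> x"
| "lsubst \<sigma> (Lam T t) =
     Lam T (lsubst (\<lambda>i. case i of 0 \<Rightarrow> Var 0 | Suc j \<Rightarrow> lren Suc (\<sigma> j)) t)"
| "lsubst \<sigma> (App t s) = App (lsubst \<sigma> t) (lsubst \<sigma> s)"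
| "lsubst \<sigma> (Mu T c) = Mu T (lsubstc (\<lambda>i. mren Suc (\<sigma> i)) c)"
| "lsubst \<sigma> Zero = Zero"
| "lsubst \<sigma> (Sc t) = Sc (lsubst \<sigma> t)"
| "lsubst \<sigma> (Nrec T r s t) = Nrec T (lsubst \<sigma> r) (lsubst \<sigma> s) (lsubst \<sigma> t)"
| "lsubstc \<sigma> (Pass a t) = Pass a (lsubst \<sigma> t)"

text \<open>t[x:=r] for x the outermost bound index 0 (the binder is removed).\<close>
definition subst0 :: "trm \<Rightarrow> trm \<Rightarrow> trm" where
  "subst0 t r = lsubst (\<lambda>i. case i of 0 \<Rightarrow> r | Suc j \<Rightarrow> Var j) t"

text \<open>Structural substitution t[a := a E]: every command [a]u becomes
[a] E[u[a := a E]]; the mu-variable a itself is kept.  (The case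
c[b := a Hole] of rule (mu i) is a renaming of mu-variables, see below.)\<close>
fun ssub :: "nat \<Rightarrow> ctx \<Rightarrow> trm \<Rightarrow> trm"
and ssubc :: "nat \<Rightarrow> ctx \<Rightarrow> cmd \<Rightarrow> cmd" where
  "ssub a E (Var x) = Var x"
| "ssub a E (Lam T t) = Lam T (ssub a (lren_ctx Suc E) t)"
| "ssub a E (App t s) = App (ssub a E t) (ssub a E s)"
| "ssub a E (Mu T c) = Mu T (ssubc (Suc a) (mren_ctx Suc E) c)"
| "ssub a E Zero = Zero"
| "ssub a E (Sc t) = Sc (ssub a E t)"
| "ssub a E (Nrec T r s t) = Nrec T (ssub a E r) (ssub a E s) (ssub a E t)"
| "ssubc a E (Pass b u) =
     (if b = a then Pass b (fill E (ssub a E u)) else Pass b (ssub a E u))"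

fun FCV :: "trm \<Rightarrow> nat set"
and FCVc :: "cmd \<Rightarrow> nat set" where
  "FCV (Var x) = {}"
| "FCV (Lam T t) = FCV t"
| "FCV (App t s) = FCV t \<union> FCV s"
| "FCV (Mu T c) = {a. Suc a \<in> FCVc c}"
| "FCV Zero = {}"
| "FCV (Sc t) = FCV t"
| "FCV (Nrec T r s t) = FCV r \<union> FCV s \<union> FCV t"
| "FCVc (Pass a t) = insert a (FCV t)"

text \<open>Typing environments: functions from de Bruijn indices to types.\<close>
definition cons_env :: "ty \<Rightarrow> (nat \<Rightarrow> ty) \<Rightarrow> nat \<Rightarrow> ty" where
  "cons_env T \<Gamma> i = (case i of 0 \<Rightarrow> T | Suc j \<Rightarrow> \<Gamma> j)"

inductive typed :: "(nat \<Rightarrow> ty) \<Rightarrow> (nat \<Rightarrow> ty) \<Rightarrow> trm \<Rightarrow> ty \<Rightarrow> bool"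
and typedc :: "(nat \<Rightarrow> ty) \<Rightarrow> (nat \<Rightarrow> ty) \<Rightarrow> cmd \<Rightarrow> bool" where
  T_Var: "typed \<Gamma> \<Delta> (Var x) (\<Gamma> x)"
| T_Lam: "typed (cons_env S \<Gamma>) \<Delta> t T \<Longrightarrow> typed \<Gamma> \<Delta> (Lam S t) (Arr S T)"
| T_App: "typed \<Gamma> \<Delta> t (Arr S T) \<Longrightarrow> typed \<Gamma> \<Delta> s S \<Longrightarrow> typed \<Gamma> \<Delta> (App t s) T"
| T_Zero: "typed \<Gamma> \<Delta> Zero Nat"
| T_Sc: "typed \<Gamma> \<Delta> t Nat \<Longrightarrow> typed \<Gamma> \<Delta> (Sc t) Nat"
| T_Nrec: "typed \<Gamma> \<Delta> r R \<Longrightarrow> typed \<Gamma> \<Delta> s (Arr Nat (Arr R R)) \<Longrightarrow> typed \<Gamma> \<Delta> t Nat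
           \<Longrightarrow> typed \<Gamma> \<Delta> (Nrec R r s t) R"
| T_Mu: "typedc \<Gamma> (cons_env R \<Delta>) c \<Longrightarrow> typed \<Gamma> \<Delta> (Mu R c) R"
| T_Pass: "typed \<Gamma> \<Delta> t (\<Delta> a) \<Longrightarrow> typedc \<Gamma> \<Delta> (Pass a t)"

inductive red :: "trm \<Rightarrow> trm \<Rightarrow> bool"
and redc :: "cmd \<Rightarrow> cmd \<Rightarrow> bool" where
  r_beta: "red (App (Lam T t) r) (subst0 t r)"
| r_muS: "red (Sc (Mu T c)) (Mu T (ssubc 0 (CSc Hole) c))"
| r_muR: "red (App (Mu (Arr S T) c) s) (Mu T (ssubc 0 (CApp Hole (mren Suc s)) c))"
| r_mueta: "0 \<notin> FCV t \<Longrightarrow> red (Mu T (Pass 0 t)) (mren (\<lambda>i. i - 1) t)"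
| r_mui: "redc (Pass a (Mu T c)) (mrenc (\<lambda>i. case i of 0 \<Rightarrow> a | Suc j \<Rightarrow> j) c)"
| r_zero: "red (Nrec R r s Zero) r"
| r_suc: "red (Nrec R r s (Sc (num n))) (App (App s (num n)) (Nrec R r s (num n)))"
| r_muN: "red (Nrec R r s (Mu T c))
            (Mu R (ssubc 0 (CNrec R (mren Suc r) (mren Suc s) Hole) c))"
| c_Lam: "red t t' \<Longrightarrow> red (Lam T t) (Lam T t')"
| c_App1: "red t t' \<Longrightarrow> red (App t s) (App t' s)"
| c_App2: "red s s' \<Longrightarrow> red (App t s) (App t s')"
| c_Mu: "redc c c' \<Longrightarrow> red (Mu T c) (Mu T c')"
| c_Sc: "red t t' \<Longrightarrow> red (Sc t) (Sc t')"
| c_Nrec1: "red r r' \<Longrightarrow> red (Nrec R r s t) (Nrec R r' s t)"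
| c_Nrec2: "red s s' \<Longrightarrow> red (Nrec R r s t) (Nrec R r s' t)"
| c_Nrec3: "red t t' \<Longrightarrow> red (Nrec R r s t) (Nrec R r s t')"
| c_Pass: "red t t' \<Longrightarrow> redc (Pass a t) (Pass a t')"

end

theory Submission
  imports Defs
begin

lemma ext_0[simp]: "ext f 0 = 0" by (simp add: ext_def)
lemma ext_Suc[simp]: "ext f (Suc j) = Suc (f j)" by (simp add: ext_def)
lemma ext_o[simp]: "(\<lambda>a. ext f (ext g a)) = ext (\<lambda>a. f (g a))"
  by (rule ext, simp add: ext_def split: nat.split)
lemma ext_id[simp]: "ext id = id" by (rule ext, simp add: ext_def split: nat.split)
lemma ext_id'[simp]: "ext (\<lambda>x. x) = (\<lambda>x. x)" by (rule ext, simp add: ext_def split: nat.split)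

lemma lren_comp[simp]: "lren f (lren g t) = lren (\<lambda>a. f (g a)) t" "lrenc f (lrenc g c) = lrenc (\<lambda>a. f (g a)) c"
  by (induct t and c arbitrary: f g and f g rule: trm.induct cmd.induct) simp_all
lemma mren_comp[simp]: "mren f (mren g t) = mren (\<lambda>a. f (g a)) t" "mrenc f (mrenc g c) = mrenc (\<lambda>a. f (g a)) c"
  by (induct t and c arbitrary: f g and f g rule: trm.induct cmd.induct) simp_all
lemma lren_mren: "lren f (mren g t) = mren g (lren f t)" "lrenc f (mrenc g c) = mrenc g (lrenc f c)"
  by (induct t and c arbitrary: f g and f g rule: trm.induct cmd.induct) simp_all
lemma lren_id[simp]: "lren (\<lambda>x. x) t = t" "lrenc (\<lambda>x. x) c = c"
  by (induct t and c rule: trm.induct cmd.induct) simp_all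
lemma mren_id[simp]: "mren (\<lambda>x. x) t = t" "mrenc (\<lambda>x. x) c = c"
  by (induct t and c rule: trm.induct cmd.induct) simp_all

lemma lren_ctx_comp[simp]: "lren_ctx f (lren_ctx g E) = lren_ctx (\<lambda>a. f (g a)) E"
  by (induct E) simp_all
lemma mren_ctx_comp[simp]: "mren_ctx f (mren_ctx g E) = mren_ctx (\<lambda>a. f (g a)) E"
  by (induct E) simp_all
lemma lren_mren_ctx: "lren_ctx f (mren_ctx g E) = mren_ctx g (lren_ctx f E)"
  by (induct E) (simp_all add: lren_mren)
lemma lren_ctx_id[simp]: "lren_ctx (\<lambda>x. x) E = E" by (induct E) simp_all
lemma mren_ctx_id[simp]: "mren_ctx (\<lambda>x. x) E = E" by (induct E) simp_all

fun cplug :: "ctx \<Rightarrow> ctx \<Rightarrow> ctx" where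
  "cplug Hole F = F"
| "cplug (CApp E t) F = CApp (cplug E F) t"
| "cplug (CSc E) F = CSc (cplug E F)"
| "cplug (CNrec T r s E) F = CNrec T r s (cplug E F)"

lemma cplug_Hole[simp]: "cplug E Hole = E" by (induct E) simp_all
lemma fill_cplug[simp]: "fill (cplug E F) u = fill E (fill F u)" by (induct E) simp_all
lemma cplug_assoc[simp]: "cplug (cplug E F) G = cplug E (cplug F G)" by (induct E) simp_all
lemma lren_fill[simp]: "lren f (fill E u) = fill (lren_ctx f E) (lren f u)" by (induct E) simp_all
lemma mren_fill[simp]: "mren f (fill E u) = fill (mren_ctx f E) (mren f u)" by (induct E) simp_all
lemma lren_cplug[simp]: "lren_ctx f (cplug E F) = cplug (lren_ctx f E) (lren_ctx f F)" by (induct E) simp_all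
lemma mren_cplug[simp]: "mren_ctx f (cplug E F) = cplug (mren_ctx f E) (mren_ctx f F)" by (induct E) simp_all

definition upl :: "(nat \<Rightarrow> trm) \<Rightarrow> nat \<Rightarrow> trm" where
  "upl \<sigma> = (\<lambda>i. case i of 0 \<Rightarrow> Var 0 | Suc j \<Rightarrow> lren Suc (\<sigma> j))"
definition thmu :: "(nat \<Rightarrow> nat \<times> ctx) \<Rightarrow> nat \<Rightarrow> nat \<times> ctx" where
  "thmu \<theta> = (\<lambda>b. case b of 0 \<Rightarrow> (0, Hole) | Suc j \<Rightarrow> (Suc (fst (\<theta> j)), mren_ctx Suc (snd (\<theta> j))))"

lemma upl_0[simp]: "upl \<sigma> 0 = Var 0" and upl_Suc[simp]: "upl \<sigma> (Suc j) = lren Suc (\<sigma> j)"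
  by (simp_all add: upl_def)
lemma thmu_0[simp]: "thmu \<theta> 0 = (0, Hole)" and thmu_Suc[simp]: "thmu \<theta> (Suc j) = (Suc (fst (\<theta> j)), mren_ctx Suc (snd (\<theta> j)))"
  by (simp_all add: thmu_def)

fun sb :: "(nat \<Rightarrow> trm) \<Rightarrow> (nat \<Rightarrow> nat \<times> ctx) \<Rightarrow> trm \<Rightarrow> trm"
and sbc :: "(nat \<Rightarrow> trm) \<Rightarrow> (nat \<Rightarrow> nat \<times> ctx) \<Rightarrow> cmd \<Rightarrow> cmd" where
  "sb \<sigma> \<theta> (Var x) = \<sigma> x"
| "sb \<sigma> \<theta> (Lam T t) = Lam T (sb (upl \<sigma>) (\<lambda>b. (fst (\<theta> b), lren_ctx Suc (snd (\<theta> b)))) t)"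
| "sb \<sigma> \<theta> (App t s) = App (sb \<sigma> \<theta> t) (sb \<sigma> \<theta> s)"
| "sb \<sigma> \<theta> (Mu T c) = Mu T (sbc (\<lambda>i. mren Suc (\<sigma> i)) (thmu \<theta>) c)"
| "sb \<sigma> \<theta> Zero = Zero"
| "sb \<sigma> \<theta> (Sc t) = Sc (sb \<sigma> \<theta> t)"
| "sb \<sigma> \<theta> (Nrec T r s t) = Nrec T (sb \<sigma> \<theta> r) (sb \<sigma> \<theta> s) (sb \<sigma> \<theta> t)"
| "sbc \<sigma> \<theta> (Pass a t) = Pass (fst (\<theta> a)) (fill (snd (\<theta> a)) (sb \<sigma> \<theta> t))"

fun sbx :: "(nat \<Rightarrow> trm) \<Rightarrow> (nat \<Rightarrow> nat \<times> ctx) \<Rightarrow> ctx \<Rightarrow> ctx" where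
  "sbx \<sigma> \<theta> Hole = Hole"
| "sbx \<sigma> \<theta> (CApp E t) = CApp (sbx \<sigma> \<theta> E) (sb \<sigma> \<theta> t)"
| "sbx \<sigma> \<theta> (CSc E) = CSc (sbx \<sigma> \<theta> E)"
| "sbx \<sigma> \<theta> (CNrec T r s E) = CNrec T (sb \<sigma> \<theta> r) (sb \<sigma> \<theta> s) (sbx \<sigma> \<theta> E)"

lemma sb_fill[simp]: "sb \<sigma> \<theta> (fill E u) = fill (sbx \<sigma> \<theta> E) (sb \<sigma> \<theta> u)" by (induct E) simp_all
lemma sbx_cplug[simp]: "sbx \<sigma> \<theta> (cplug E F) = cplug (sbx \<sigma> \<theta> E) (sbx \<sigma> \<theta> F)" by (induct E) simp_all

lemma upl_o_ext[simp]: "(\<lambda>a. upl \<sigma> (ext f a)) = upl (\<lambda>a. \<sigma> (f a))"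
  by (rule ext, simp add: upl_def ext_def split: nat.split)

lemma sb_lren: "sb \<sigma> \<theta> (lren f t) = sb (\<lambda>a. \<sigma> (f a)) \<theta> t" "sbc \<sigma> \<theta> (lrenc f c) = sbc (\<lambda>a. \<sigma> (f a)) \<theta> c"
  by (induct t and c arbitrary: \<sigma> \<theta> f and \<sigma> \<theta> f rule: trm.induct cmd.induct) simp_all

lemma lren_upl[simp]: "(\<lambda>a. lren (ext f) (upl \<sigma> a)) = upl (\<lambda>a. lren f (\<sigma> a))"
  by (rule ext, simp add: upl_def split: nat.split)
lemma lth_thmu[simp]: "(\<lambda>b. (fst (thmu \<theta> b), lren_ctx f (snd (thmu \<theta> b)))) = thmu (\<lambda>b. (fst (\<theta> b), lren_ctx f (snd (\<theta> b))))"
  by (rule ext, simp add: thmu_def lren_mren_ctx split: nat.split)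

lemma lren_sb: "lren f (sb \<sigma> \<theta> t) = sb (\<lambda>a. lren f (\<sigma> a)) (\<lambda>b. (fst (\<theta> b), lren_ctx f (snd (\<theta> b)))) t"
  "lrenc f (sbc \<sigma> \<theta> c) = sbc (\<lambda>a. lren f (\<sigma> a)) (\<lambda>b. (fst (\<theta> b), lren_ctx f (snd (\<theta> b)))) c"
  by (induct t and c arbitrary: \<sigma> \<theta> f and \<sigma> \<theta> f rule: trm.induct cmd.induct) (simp_all add: lren_mren)

lemma thmu_o_ext[simp]: "(\<lambda>a. thmu \<theta> (ext f a)) = thmu (\<lambda>a. \<theta> (f a))"
  by (rule ext, simp add: thmu_def ext_def split: nat.split)

lemma sb_mren: "sb \<sigma> \<theta> (mren f t) = sb \<sigma> (\<lambda>a. \<theta> (f a)) t" "sbc \<sigma> \<theta> (mrenc f c) = sbc \<sigma> (\<lambda>a. \<theta> (f a)) c"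
  by (induct t and c arbitrary: \<sigma> \<theta> f and \<sigma> \<theta> f rule: trm.induct cmd.induct) simp_all

lemma mren_upl[simp]: "(\<lambda>a. mren f (upl \<sigma> a)) = upl (\<lambda>a. mren f (\<sigma> a))"
  by (rule ext, simp add: upl_def lren_mren split: nat.split)
lemma mth_thmu[simp]: "(\<lambda>b. (ext f (fst (thmu \<theta> b)), mren_ctx (ext f) (snd (thmu \<theta> b)))) = thmu (\<lambda>b. (f (fst (\<theta> b)), mren_ctx f (snd (\<theta> b))))"
  by (rule ext, simp add: thmu_def split: nat.split)

lemma mren_sb: "mren f (sb \<sigma> \<theta> t) = sb (\<lambda>a. mren f (\<sigma> a)) (\<lambda>b. (f (fst (\<theta> b)), mren_ctx f (snd (\<theta> b)))) t"
  "mrenc f (sbc \<sigma> \<theta> c) = sbc (\<lambda>a. mren f (\<sigma> a)) (\<lambda>b. (f (fst (\<theta> b)), mren_ctx f (snd (\<theta> b)))) c"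
  by (induct t and c arbitrary: \<sigma> \<theta> f and \<sigma> \<theta> f rule: trm.induct cmd.induct) (simp_all add: lren_mren_ctx lren_mren)



lemma sbx_lren: "sbx \<sigma> \<theta> (lren_ctx f E) = sbx (\<lambda>a. \<sigma> (f a)) \<theta> E"
  by (induct E) (simp_all add: sb_lren)
lemma lren_sbx: "lren_ctx f (sbx \<sigma> \<theta> E) = sbx (\<lambda>a. lren f (\<sigma> a)) (\<lambda>b. (fst (\<theta> b), lren_ctx f (snd (\<theta> b)))) E"
  by (induct E) (simp_all add: lren_sb)
lemma sbx_mren: "sbx \<sigma> \<theta> (mren_ctx f E) = sbx \<sigma> (\<lambda>a. \<theta> (f a)) E"
  by (induct E) (simp_all add: sb_mren)
lemma mren_sbx: "mren_ctx f (sbx \<sigma> \<theta> E) = sbx (\<lambda>a. mren f (\<sigma> a)) (\<lambda>b. (f (fst (\<theta> b)), mren_ctx f (snd (\<theta> b)))) E"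
  by (induct E) (simp_all add: mren_sb)

lemma LS: "sb (upl \<sigma>) (\<lambda>b. (fst (\<theta> b), lren_ctx Suc (snd (\<theta> b)))) (lren Suc t) = lren Suc (sb \<sigma> \<theta> t)"
  by (simp add: sb_lren lren_sb)
lemma LSx: "sbx (upl \<sigma>) (\<lambda>b. (fst (\<theta> b), lren_ctx Suc (snd (\<theta> b)))) (lren_ctx Suc E) = lren_ctx Suc (sbx \<sigma> \<theta> E)"
  by (simp add: sbx_lren lren_sbx)
lemma MS: "sb (\<lambda>i. mren Suc (\<sigma> i)) (thmu \<theta>) (mren Suc t) = mren Suc (sb \<sigma> \<theta> t)"
  by (simp add: sb_mren mren_sb)
lemma MSx: "sbx (\<lambda>i. mren Suc (\<sigma> i)) (thmu \<theta>) (mren_ctx Suc E) = mren_ctx Suc (sbx \<sigma> \<theta> E)"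
  by (simp add: sbx_mren mren_sbx)

definition compt :: "(nat \<Rightarrow> trm) \<Rightarrow> (nat \<Rightarrow> nat \<times> ctx) \<Rightarrow> (nat \<Rightarrow> nat \<times> ctx) \<Rightarrow> nat \<Rightarrow> nat \<times> ctx" where
  "compt \<sigma>2 \<theta>2 \<theta>1 = (\<lambda>b. (fst (\<theta>2 (fst (\<theta>1 b))), cplug (snd (\<theta>2 (fst (\<theta>1 b)))) (sbx \<sigma>2 \<theta>2 (snd (\<theta>1 b)))))"

lemma compt_app: "compt \<sigma>2 \<theta>2 \<theta>1 b = (fst (\<theta>2 (fst (\<theta>1 b))), cplug (snd (\<theta>2 (fst (\<theta>1 b)))) (sbx \<sigma>2 \<theta>2 (snd (\<theta>1 b))))"
  by (simp add: compt_def)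

lemma comp_upl[simp]: "(\<lambda>a. sb (upl \<sigma>2) (\<lambda>b. (fst (\<theta>2 b), lren_ctx Suc (snd (\<theta>2 b)))) (upl \<sigma>1 a)) = upl (\<lambda>a. sb \<sigma>2 \<theta>2 (\<sigma>1 a))"
  apply (rule ext) subgoal for i by (cases i) (simp_all add: LS) done
lemma comp_thla[simp]: "compt (upl \<sigma>2) (\<lambda>b. (fst (\<theta>2 b), lren_ctx Suc (snd (\<theta>2 b)))) (\<lambda>b. (fst (\<theta>1 b), lren_ctx Suc (snd (\<theta>1 b))))
   = (\<lambda>b. (fst (compt \<sigma>2 \<theta>2 \<theta>1 b), lren_ctx Suc (snd (compt \<sigma>2 \<theta>2 \<theta>1 b))))"
  by (rule ext, simp add: compt_app LSx)
lemma comp_upm[simp]: "(\<lambda>a. sb (\<lambda>i. mren Suc (\<sigma>2 i)) (thmu \<theta>2) (mren Suc (\<sigma>1 a))) = (\<lambda>a. mren Suc (sb \<sigma>2 \<theta>2 (\<sigma>1 a)))"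
  by (rule ext, simp add: MS)
lemma comp_thmu[simp]: "compt (\<lambda>i. mren Suc (\<sigma>2 i)) (thmu \<theta>2) (thmu \<theta>1) = thmu (compt \<sigma>2 \<theta>2 \<theta>1)"
  apply (rule ext) subgoal for i by (cases i) (simp_all add: compt_app MSx) done

lemma sb_sb: "sb \<sigma>2 \<theta>2 (sb \<sigma>1 \<theta>1 t) = sb (\<lambda>a. sb \<sigma>2 \<theta>2 (\<sigma>1 a)) (compt \<sigma>2 \<theta>2 \<theta>1) t"
  "sbc \<sigma>2 \<theta>2 (sbc \<sigma>1 \<theta>1 c) = sbc (\<lambda>a. sb \<sigma>2 \<theta>2 (\<sigma>1 a)) (compt \<sigma>2 \<theta>2 \<theta>1) c"
  by (induct t and c arbitrary: \<sigma>1 \<theta>1 \<sigma>2 \<theta>2 and \<sigma>1 \<theta>1 \<sigma>2 \<theta>2 rule: trm.induct cmd.induct)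
    (simp_all add: compt_app)

lemma sbx_sbx: "sbx \<sigma>2 \<theta>2 (sbx \<sigma>1 \<theta>1 E) = sbx (\<lambda>a. sb \<sigma>2 \<theta>2 (\<sigma>1 a)) (compt \<sigma>2 \<theta>2 \<theta>1) E"
  by (induct E) (simp_all add: sb_sb)

definition idth :: "nat \<Rightarrow> nat \<times> ctx" where "idth = (\<lambda>b. (b, Hole))"
definition renth :: "(nat \<Rightarrow> nat) \<Rightarrow> nat \<Rightarrow> nat \<times> ctx" where "renth f = (\<lambda>b. (f b, Hole))"
definition ssth :: "nat \<Rightarrow> ctx \<Rightarrow> nat \<Rightarrow> nat \<times> ctx" where
  "ssth a E = (\<lambda>b. if b = a then (a, E) else (b, Hole))"
definition cons0 :: "trm \<Rightarrow> nat \<Rightarrow> trm" where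
  "cons0 r = (\<lambda>i. case i of 0 \<Rightarrow> r | Suc j \<Rightarrow> Var j)"

lemma idth_app: "idth b = (b, Hole)" by (simp add: idth_def)
lemma renth_app: "renth f b = (f b, Hole)" by (simp add: renth_def)
lemma ssth_app: "ssth a E b = (if b = a then (a, E) else (b, Hole))" by (simp add: ssth_def)
lemma cons0_0[simp]: "cons0 r 0 = r" and cons0_Suc[simp]: "cons0 r (Suc j) = Var j"
  by (simp_all add: cons0_def)
lemmas ptw = compt_app idth_app renth_app ssth_app
lemma fst_idth[simp]: "fst (idth b) = b" and snd_idth[simp]: "snd (idth b) = Hole" by (simp_all add: idth_app)
lemma fst_renth[simp]: "fst (renth f b) = f b" and snd_renth[simp]: "snd (renth f b) = Hole" by (simp_all add: renth_app)
lemma fst_ssth[simp]: "fst (ssth a E b) = b" and snd_ssth[simp]: "snd (ssth a E b) = (if b = a then E else Hole)" by (simp_all add: ssth_app)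

lemma upl_Var[simp]: "upl Var = Var" by (rule ext, simp add: upl_def split: nat.split)
lemma upm_Var[simp]: "(\<lambda>i. mren Suc (Var i)) = Var" by (rule ext, simp)
lemma thla_idth[simp]: "(\<lambda>b. (b, Hole)) = idth" by (rule ext, simp add: ptw)
lemma thmu_idth[simp]: "thmu idth = idth" by (rule ext, simp add: ptw thmu_def split: nat.split)
lemma thla_renth[simp]: "(\<lambda>b. (f b, Hole)) = renth f" by (rule ext, simp add: ptw)
lemma thmu_renth[simp]: "thmu (renth f) = renth (ext f)" by (rule ext, simp add: ptw thmu_def split: nat.split)
lemma thla_ssth[simp]: "(\<lambda>b. (b, lren_ctx Suc (if b = a then E else Hole))) = ssth a (lren_ctx Suc E)" by (rule ext, simp add: ptw)
lemma thmu_ssth[simp]: "thmu (ssth a E) = ssth (Suc a) (mren_ctx Suc E)" by (rule ext, simp add: ptw thmu_def split: nat.split)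
lemma upl_Varo[simp]: "upl (\<lambda>a. Var (f a)) = (\<lambda>a. Var (ext f a))" by (rule ext, simp add: upl_def split: nat.split)

lemma sb_id[simp]: "sb Var idth t = t" "sbc Var idth c = c"
  by (induct t and c rule: trm.induct cmd.induct) simp_all
lemma sbx_id[simp]: "sbx Var idth E = E" by (induct E) simp_all

lemma lsubst_sb: "lsubst \<sigma> t = sb \<sigma> idth t" "lsubstc \<sigma> c = sbc \<sigma> idth c"
proof (induct t and c arbitrary: \<sigma> and \<sigma> rule: trm.induct cmd.induct)
  case (Lam T t) then show ?case by (simp add: upl_def)
qed simp_all

lemma mren_sb_eq: "mren f t = sb Var (renth f) t" "mrenc f c = sbc Var (renth f) c"
  by (induct t and c arbitrary: f and f rule: trm.induct cmd.induct) simp_all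
lemma mren_ctx_sb_eq: "mren_ctx f E = sbx Var (renth f) E"
  by (induct E) (simp_all add: mren_sb_eq)
lemma lren_sb_eq: "lren f t = sb (\<lambda>a. Var (f a)) idth t" "lrenc f c = sbc (\<lambda>a. Var (f a)) idth c"
  by (induct t and c arbitrary: f and f rule: trm.induct cmd.induct) simp_all
lemma lren_ctx_sb_eq: "lren_ctx f E = sbx (\<lambda>a. Var (f a)) idth E"
  by (induct E) (simp_all add: lren_sb_eq)
lemma ssub_sb_eq: "ssub a E t = sb Var (ssth a E) t" "ssubc a E c = sbc Var (ssth a E) c"
  by (induct t and c arbitrary: a E and a E rule: trm.induct cmd.induct) simp_all
lemma subst0_sb_eq: "subst0 t r = sb (cons0 r) idth t"
  by (simp add: subst0_def lsubst_sb cons0_def)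



inductive rd :: "trm \<Rightarrow> trm \<Rightarrow> bool" and rdc :: "cmd \<Rightarrow> cmd \<Rightarrow> bool" where
  d_beta: "rd (App (Lam T t) r) (subst0 t r)"
| d_muS: "rd (Sc (Mu T c)) (Mu T (ssubc 0 (CSc Hole) c))"
| d_muR: "rd (App (Mu A c) s) (Mu B (ssubc 0 (CApp Hole (mren Suc s)) c))"
| d_mueta: "rd (Mu T (Pass 0 (mren Suc u))) u"
| d_mui: "rdc (Pass a (Mu T c)) (mrenc (\<lambda>i. case i of 0 \<Rightarrow> a | Suc j \<Rightarrow> j) c)"
| d_zero: "rd (Nrec R r s Zero) r"
| d_suc: "rd (Nrec R r s (Sc (num n))) (App (App s (num n)) (Nrec R r s (num n)))"
| d_muN: "rd (Nrec R r s (Mu T c)) (Mu R (ssubc 0 (CNrec R (mren Suc r) (mren Suc s) Hole) c))"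
| d_Lam: "rd t t' \<Longrightarrow> rd (Lam T t) (Lam T t')"
| d_App1: "rd t t' \<Longrightarrow> rd (App t s) (App t' s)"
| d_App2: "rd s s' \<Longrightarrow> rd (App t s) (App t s')"
| d_Mu: "rdc c c' \<Longrightarrow> rd (Mu T c) (Mu T c')"
| d_Sc: "rd t t' \<Longrightarrow> rd (Sc t) (Sc t')"
| d_Nrec1: "rd r r' \<Longrightarrow> rd (Nrec R r s t) (Nrec R r' s t)"
| d_Nrec2: "rd s s' \<Longrightarrow> rd (Nrec R r s t) (Nrec R r s' t)"
| d_Nrec3: "rd t t' \<Longrightarrow> rd (Nrec R r s t) (Nrec R r s t')"
| d_Pass: "rd t t' \<Longrightarrow> rdc (Pass a t) (Pass a t')"

lemma mren_cong_FCV: "(\<forall>a\<in>FCV t. f a = g a) \<Longrightarrow> mren f t = mren g t"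
  "(\<forall>a\<in>FCVc c. f a = g a) \<Longrightarrow> mrenc f c = mrenc g c"
proof (induct t and c arbitrary: f g and f g rule: trm.induct cmd.induct)
  case (Mu T c)
  have "\<forall>a\<in>FCVc c. ext f a = ext g a"
  proof
    fix a assume "a \<in> FCVc c" then show "ext f a = ext g a" using Mu.prems by (cases a) auto
  qed
  then show ?case using Mu.hyps by simp
qed auto

lemma FCV_shift: "0 \<notin> FCV t \<Longrightarrow> mren Suc (mren (\<lambda>i. i - 1) t) = t"
proof -
  assume "0 \<notin> FCV t"
  then have "mren (\<lambda>a. Suc (a - 1)) t = mren (\<lambda>x. x) t"
    by (intro mren_cong_FCV(1) ballI) (case_tac a, auto)
  then show ?thesis by simp
qed

lemma red_rd: "red t t' \<Longrightarrow> rd t t'" "redc c c' \<Longrightarrow> rdc c c'"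
proof (induct rule: red_redc.inducts)
  case (r_mueta t T)
  then have e: "mren Suc (mren (\<lambda>i. i - 1) t) = t" by (rule FCV_shift)
  show ?case using d_mueta[of T "mren (\<lambda>i. i - 1) t"] by (simp only: e)
qed (auto intro: rd_rdc.intros)

abbreviation "rds \<equiv> rd\<^sup>*\<^sup>*"
abbreviation "rdp \<equiv> rd\<^sup>+\<^sup>+"
abbreviation "rdcs \<equiv> rdc\<^sup>*\<^sup>*"
abbreviation "rdcp \<equiv> rdc\<^sup>+\<^sup>+"

lemma rtp_map: assumes h: "\<And>x y. r x y \<Longrightarrow> s\<^sup>*\<^sup>* (f x) (f y)" shows "r\<^sup>*\<^sup>* x y \<Longrightarrow> s\<^sup>*\<^sup>* (f x) (f y)"
  by (induct rule: rtranclp_induct) (auto intro: rtranclp_trans h)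
lemma tp_map: assumes h: "\<And>x y. r x y \<Longrightarrow> s\<^sup>+\<^sup>+ (f x) (f y)" shows "r\<^sup>+\<^sup>+ x y \<Longrightarrow> s\<^sup>+\<^sup>+ (f x) (f y)"
  by (induct rule: tranclp_induct) (auto intro: tranclp_trans h)
lemma tp_map1: "(\<And>x y. r x y \<Longrightarrow> s (f x) (f y)) \<Longrightarrow> r\<^sup>+\<^sup>+ x y \<Longrightarrow> s\<^sup>+\<^sup>+ (f x) (f y)"
  by (rule tp_map) auto
lemma rtp_map1: "(\<And>x y. r x y \<Longrightarrow> s (f x) (f y)) \<Longrightarrow> r\<^sup>*\<^sup>* x y \<Longrightarrow> s\<^sup>*\<^sup>* (f x) (f y)"
  by (rule rtp_map) auto

lemma rd_fill: "rd u u' \<Longrightarrow> rd (fill E u) (fill E u')"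
  by (induct E) (auto intro: rd_rdc.intros)

lemma rdp_Lam: "rdp t t' \<Longrightarrow> rdp (Lam T t) (Lam T t')" by (rule tp_map1[where f="Lam T"]) (auto intro: d_Lam)
lemma rdp_App1: "rdp t t' \<Longrightarrow> rdp (App t s) (App t' s)" by (rule tp_map1[where f="\<lambda>t. App t s"]) (auto intro: d_App1)
lemma rdp_App2: "rdp s s' \<Longrightarrow> rdp (App t s) (App t s')" by (rule tp_map1[where f="\<lambda>s. App t s"]) (auto intro: d_App2)
lemma rdp_Mu: "rdcp c c' \<Longrightarrow> rdp (Mu T c) (Mu T c')" by (rule tp_map1[where f="Mu T"]) (auto intro: d_Mu)
lemma rdp_Sc: "rdp t t' \<Longrightarrow> rdp (Sc t) (Sc t')" by (rule tp_map1[where f="Sc"]) (auto intro: d_Sc)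
lemma rdp_Nrec1: "rdp r r' \<Longrightarrow> rdp (Nrec R r s t) (Nrec R r' s t)" by (rule tp_map1[where f="\<lambda>r. Nrec R r s t"]) (auto intro: d_Nrec1)
lemma rdp_Nrec2: "rdp s s' \<Longrightarrow> rdp (Nrec R r s t) (Nrec R r s' t)" by (rule tp_map1[where f="\<lambda>s. Nrec R r s t"]) (auto intro: d_Nrec2)
lemma rdp_Nrec3: "rdp t t' \<Longrightarrow> rdp (Nrec R r s t) (Nrec R r s t')" by (rule tp_map1[where f="\<lambda>t. Nrec R r s t"]) (auto intro: d_Nrec3)
lemma rdp_Pass: "rdp t t' \<Longrightarrow> rdcp (Pass a t) (Pass a t')" by (rule tp_map1[where f="Pass a"]) (auto intro: d_Pass)
lemma rdp_fill: "rdp t t' \<Longrightarrow> rdp (fill E t) (fill E t')" by (rule tp_map1[where f="fill E"]) (auto intro: rd_fill)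

lemma rds_App1: "rds t t' \<Longrightarrow> rds (App t s) (App t' s)" by (rule rtp_map1[where f="\<lambda>t. App t s"]) (auto intro: d_App1)
lemma rds_Pass: "rds t t' \<Longrightarrow> rdcs (Pass a t) (Pass a t')" by (rule rtp_map1[where f="Pass a"]) (auto intro: d_Pass)
lemma rds_Sc: "rds t t' \<Longrightarrow> rds (Sc t) (Sc t')" by (rule rtp_map1[where f="Sc"]) (auto intro: d_Sc)
lemma rds_Nrec3: "rds t t' \<Longrightarrow> rds (Nrec R r s t) (Nrec R r s t')" by (rule rtp_map1[where f="\<lambda>t. Nrec R r s t"]) (auto intro: d_Nrec3)
lemma rds_fill: "rds t t' \<Longrightarrow> rds (fill E t) (fill E t')" by (rule rtp_map1[where f="fill E"]) (auto intro: rd_fill)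

lemma sb_num[simp]: "sb \<sigma> \<theta> (num n) = num n" by (induct n) simp_all
lemma mren_num[simp]: "mren f (num n) = num n" by (induct n) simp_all
lemma lren_num[simp]: "lren f (num n) = num n" by (induct n) simp_all
lemma num_inj[simp]: "(num n = num m) = (n = m)"
  by (induct n arbitrary: m) (case_tac m, simp_all)+
lemma num_neq[simp]: "num n \<noteq> Mu T c" "num n \<noteq> Lam T t" "num n \<noteq> App a b" "num n \<noteq> Var x"
  "num n \<noteq> Nrec R r s t" "Mu T c \<noteq> num n" "Lam T t \<noteq> num n" "App a b \<noteq> num n" "Var x \<noteq> num n" "Nrec R r s t \<noteq> num n"
  by (cases n, simp_all)+
lemma num_nf: "rd (num n) v \<Longrightarrow> False"
proof (induct n arbitrary: v)
  case 0 then show ?case by (cases rule: rd.cases) auto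
next
  case (Suc n)
  from Suc.prems have "rd (Sc (num n)) v" by simp
  then show ?case by cases (auto intro: Suc.hyps)
qed

lemma ssth_Suc[simp]: "(\<lambda>a. ssth 0 E (Suc a)) = renth Suc"
  by (rule ext, simp add: ssth_app renth_app)
lemma ss_mren[simp]: "sb Var (ssth 0 E) (mren Suc x) = mren Suc x"
  by (subst sb_mren, simp add: mren_sb_eq)
lemma ss_mren_ctx[simp]: "sbx Var (ssth 0 F) (mren_ctx Suc E) = mren_ctx Suc E"
  by (subst sbx_mren, simp add: mren_ctx_sb_eq)

lemma beta_sb: "sb \<sigma> \<theta> (subst0 t r) = subst0 (sb (upl \<sigma>) (\<lambda>b. (fst (\<theta> b), lren_ctx Suc (snd (\<theta> b)))) t) (sb \<sigma> \<theta> r)"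
proof -
  let ?r = "sb \<sigma> \<theta> r"
  have e1: "(\<lambda>a. sb \<sigma> \<theta> (cons0 r a)) = (\<lambda>a. sb (cons0 ?r) idth (upl \<sigma> a))"
    apply (rule ext) subgoal for i by (cases i) (simp_all add: sb_lren) done
  have e2: "compt \<sigma> \<theta> idth = compt (cons0 ?r) idth (\<lambda>b. (fst (\<theta> b), lren_ctx Suc (snd (\<theta> b))))"
    by (rule ext) (simp add: compt_app sbx_lren)
  show ?thesis by (simp add: subst0_sb_eq sb_sb e1 e2)
qed

lemma FL: "sbc (\<lambda>i. mren Suc (\<sigma> i)) (thmu \<theta>) (ssubc 0 (mren_ctx Suc F) c)
   = ssubc 0 (mren_ctx Suc (sbx \<sigma> \<theta> F)) (sbc (\<lambda>i. mren Suc (\<sigma> i)) (thmu \<theta>) c)"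
proof -
  let ?G = "mren_ctx Suc (sbx \<sigma> \<theta> F)"
  have e1: "(\<lambda>a. sb (\<lambda>i. mren Suc (\<sigma> i)) (thmu \<theta>) (Var a)) = (\<lambda>a. sb Var (ssth 0 ?G) (mren Suc (\<sigma> a)))"
    by (rule ext) simp
  have e2: "compt (\<lambda>i. mren Suc (\<sigma> i)) (thmu \<theta>) (ssth 0 (mren_ctx Suc F)) = compt Var (ssth 0 ?G) (thmu \<theta>)"
    apply (rule ext) subgoal for b by (cases b) (simp_all add: compt_app ssth_app MSx) done
  show ?thesis by (simp add: ssub_sb_eq sb_sb e1 e2)
qed

lemma comp_ss: "ssubc 0 F (ssubc 0 (mren_ctx Suc E) d) = ssubc 0 (cplug F (mren_ctx Suc E)) d"
proof -
  have e2: "compt Var (ssth 0 F) (ssth 0 (mren_ctx Suc E)) = ssth 0 (cplug F (mren_ctx Suc E))"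
    apply (rule ext) subgoal for b by (cases b) (simp_all add: compt_app ssth_app) done
  show ?thesis by (simp add: ssub_sb_eq sb_sb e2)
qed



lemma ssth_Hole[simp]: "ssth a Hole = idth" by (rule ext, simp add: ssth_app idth_app)

lemma pull: "\<exists>T'. rds (fill E (Mu T d)) (Mu T' (ssubc 0 (mren_ctx Suc E) d))"
proof (induct E)
  case Hole show ?case by (auto simp: ssub_sb_eq)
next
  case (CApp E t)
  then obtain T' where h: "rds (fill E (Mu T d)) (Mu T' (ssubc 0 (mren_ctx Suc E) d))" by blast
  have "rd (App (Mu T' (ssubc 0 (mren_ctx Suc E) d)) t) (Mu T' (ssubc 0 (CApp Hole (mren Suc t)) (ssubc 0 (mren_ctx Suc E) d)))"
    by (rule d_muR)
  then have "rds (App (fill E (Mu T d)) t) (Mu T' (ssubc 0 (mren_ctx Suc (CApp E t)) d))"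
    using rds_App1[OF h, of t] by (simp add: comp_ss)
  then show ?case by auto
next
  case (CSc E)
  then obtain T' where h: "rds (fill E (Mu T d)) (Mu T' (ssubc 0 (mren_ctx Suc E) d))" by blast
  have "rd (Sc (Mu T' (ssubc 0 (mren_ctx Suc E) d))) (Mu T' (ssubc 0 (CSc Hole) (ssubc 0 (mren_ctx Suc E) d)))"
    by (rule d_muS)
  then have "rds (Sc (fill E (Mu T d))) (Mu T' (ssubc 0 (mren_ctx Suc (CSc E)) d))"
    using rds_Sc[OF h] by (simp add: comp_ss)
  then show ?case by auto
next
  case (CNrec R r s E)
  then obtain T' where h: "rds (fill E (Mu T d)) (Mu T' (ssubc 0 (mren_ctx Suc E) d))" by blast
  have "rd (Nrec R r s (Mu T' (ssubc 0 (mren_ctx Suc E) d))) (Mu R (ssubc 0 (CNrec R (mren Suc r) (mren Suc s) Hole) (ssubc 0 (mren_ctx Suc E) d)))"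
    by (rule d_muN)
  then have "rds (Nrec R r s (fill E (Mu T d))) (Mu R (ssubc 0 (mren_ctx Suc (CNrec R r s E)) d))"
    using rds_Nrec3[OF h, of R r s] by (simp add: comp_ss)
  then show ?case by auto
qed

lemma mui_eq:
  assumes th: "\<theta> a = (a', E)"
  shows "mrenc (\<lambda>i. case i of 0 \<Rightarrow> a' | Suc j \<Rightarrow> j) (ssubc 0 (mren_ctx Suc E) (sbc (\<lambda>i. mren Suc (\<sigma> i)) (thmu \<theta>) c))
       = sbc \<sigma> \<theta> (mrenc (\<lambda>i. case i of 0 \<Rightarrow> a | Suc j \<Rightarrow> j) c)"
proof -
  let ?g' = "\<lambda>i. case i of 0 \<Rightarrow> a' | Suc j \<Rightarrow> j"
  let ?g = "\<lambda>i. case i of 0 \<Rightarrow> a | Suc j \<Rightarrow> j"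
  let ?ss = "ssth 0 (mren_ctx Suc E)"
  have L: "mrenc ?g' (ssubc 0 (mren_ctx Suc E) (sbc (\<lambda>i. mren Suc (\<sigma> i)) (thmu \<theta>) c))
     = sbc (\<lambda>x. mren ?g' (sb Var ?ss (mren Suc (\<sigma> x))))
          (\<lambda>b. (?g' (fst (compt Var ?ss (thmu \<theta>) b)), mren_ctx ?g' (snd (compt Var ?ss (thmu \<theta>) b)))) c"
    by (simp only: ssub_sb_eq sb_sb mren_sb)
  have R: "sbc \<sigma> \<theta> (mrenc ?g c) = sbc \<sigma> (\<lambda>b. \<theta> (?g b)) c" by (simp only: sb_mren)
  have fe1: "(\<lambda>x. mren ?g' (sb Var ?ss (mren Suc (\<sigma> x)))) = \<sigma>" by (rule ext) simp
  have fe2: "(\<lambda>b. (?g' (fst (compt Var ?ss (thmu \<theta>) b)), mren_ctx ?g' (snd (compt Var ?ss (thmu \<theta>) b)))) = (\<lambda>b. \<theta> (?g b))"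
    apply (rule ext) subgoal for b by (cases b) (simp_all add: compt_app ssth_app th) done
  show ?thesis unfolding L R fe1 fe2 ..
qed

lemma rd_sb: "rd t t' \<Longrightarrow> rdp (sb \<sigma> \<theta> t) (sb \<sigma> \<theta> t')" "rdc c c' \<Longrightarrow> rdcp (sbc \<sigma> \<theta> c) (sbc \<sigma> \<theta> c')"
proof (induct arbitrary: \<sigma> \<theta> and \<sigma> \<theta> rule: rd_rdc.inducts)
  case (d_beta T t r)
  show ?case by (simp add: beta_sb) (rule tranclp.r_into_trancl, rule rd_rdc.d_beta)
next
  case (d_muS T c)
  have "rd (Sc (Mu T (sbc (\<lambda>i. mren Suc (\<sigma> i)) (thmu \<theta>) c))) (Mu T (ssubc 0 (CSc Hole) (sbc (\<lambda>i. mren Suc (\<sigma> i)) (thmu \<theta>) c)))"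
    by (rule rd_rdc.d_muS)
  then show ?case using FL[of \<sigma> \<theta> "CSc Hole" c] by auto
next
  case (d_muR A c s B)
  have "rd (App (Mu A (sbc (\<lambda>i. mren Suc (\<sigma> i)) (thmu \<theta>) c)) (sb \<sigma> \<theta> s))
     (Mu B (ssubc 0 (CApp Hole (mren Suc (sb \<sigma> \<theta> s))) (sbc (\<lambda>i. mren Suc (\<sigma> i)) (thmu \<theta>) c)))"
    by (rule rd_rdc.d_muR)
  then show ?case using FL[of \<sigma> \<theta> "CApp Hole s" c] by auto
next
  case (d_mueta T u)
  have "rd (Mu T (Pass 0 (mren Suc (sb \<sigma> \<theta> u)))) (sb \<sigma> \<theta> u)" by (rule rd_rdc.d_mueta)
  then show ?case by (auto simp: MS)
next
  case (d_mui a T c)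
  obtain a' E where th: "\<theta> a = (a', E)" by (cases "\<theta> a") auto
  let ?X = "sbc (\<lambda>i. mren Suc (\<sigma> i)) (thmu \<theta>) c"
  obtain T' where p: "rds (fill E (Mu T ?X)) (Mu T' (ssubc 0 (mren_ctx Suc E) ?X))" using pull by blast
  have "rdcs (Pass a' (fill E (Mu T ?X))) (Pass a' (Mu T' (ssubc 0 (mren_ctx Suc E) ?X)))" by (rule rds_Pass[OF p])
  moreover have "rdc (Pass a' (Mu T' (ssubc 0 (mren_ctx Suc E) ?X)))
     (mrenc (\<lambda>i. case i of 0 \<Rightarrow> a' | Suc j \<Rightarrow> j) (ssubc 0 (mren_ctx Suc E) ?X))" by (rule rd_rdc.d_mui)
  ultimately have "rdcp (Pass a' (fill E (Mu T ?X))) (mrenc (\<lambda>i. case i of 0 \<Rightarrow> a' | Suc j \<Rightarrow> j) (ssubc 0 (mren_ctx Suc E) ?X))"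
    by (rule rtranclp_into_tranclp1)
  moreover have "sbc \<sigma> \<theta> (mrenc (\<lambda>i. case i of 0 \<Rightarrow> a | Suc j \<Rightarrow> j) c) = mrenc (\<lambda>i. case i of 0 \<Rightarrow> a' | Suc j \<Rightarrow> j) (ssubc 0 (mren_ctx Suc E) ?X)"
    by (rule mui_eq[where \<theta>=\<theta> and a=a and a'=a' and E=E and \<sigma>=\<sigma> and c=c, OF th, symmetric])
  ultimately show ?case using th by simp
next
  case (d_zero R r s) show ?case by (auto intro: rd_rdc.d_zero)
next
  case (d_suc R r s n) show ?case by (auto intro: rd_rdc.d_suc)
next
  case (d_muN R r s T c)
  have "rd (Nrec R (sb \<sigma> \<theta> r) (sb \<sigma> \<theta> s) (Mu T (sbc (\<lambda>i. mren Suc (\<sigma> i)) (thmu \<theta>) c)))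
     (Mu R (ssubc 0 (CNrec R (mren Suc (sb \<sigma> \<theta> r)) (mren Suc (sb \<sigma> \<theta> s)) Hole) (sbc (\<lambda>i. mren Suc (\<sigma> i)) (thmu \<theta>) c)))"
    by (rule rd_rdc.d_muN)
  then show ?case using FL[of \<sigma> \<theta> "CNrec R r s Hole" c] by auto
qed (auto intro: rdp_Lam rdp_App1 rdp_App2 rdp_Mu rdp_Sc rdp_Nrec1 rdp_Nrec2 rdp_Nrec3 rdp_Pass rdp_fill)



inductive ctxred :: "ctx \<Rightarrow> ctx \<Rightarrow> bool" where
  cr_App1: "ctxred E E' \<Longrightarrow> ctxred (CApp E t) (CApp E' t)"
| cr_App2: "rd t t' \<Longrightarrow> ctxred (CApp E t) (CApp E t')"
| cr_Sc: "ctxred E E' \<Longrightarrow> ctxred (CSc E) (CSc E')"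
| cr_N1: "rd r r' \<Longrightarrow> ctxred (CNrec R r s E) (CNrec R r' s E)"
| cr_N2: "rd s s' \<Longrightarrow> ctxred (CNrec R r s E) (CNrec R r s' E)"
| cr_N3: "ctxred E E' \<Longrightarrow> ctxred (CNrec R r s E) (CNrec R r s E')"

abbreviation "ctxreds \<equiv> ctxred\<^sup>*\<^sup>*"

lemma ctxred_fill: "ctxred E E' \<Longrightarrow> rd (fill E u) (fill E' u)"
  by (induct rule: ctxred.induct) (auto intro: rd_rdc.intros)
lemma ctxreds_fill: "ctxreds E E' \<Longrightarrow> rds (fill E u) (fill E' u)"
  by (rule rtp_map1[where f="\<lambda>E. fill E u"]) (auto intro: ctxred_fill)

lemma rds_sb: "rds t t' \<Longrightarrow> rds (sb \<sigma> \<theta> t) (sb \<sigma> \<theta> t')"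
  by (rule rtp_map[where f="sb \<sigma> \<theta>"]) (auto dest: rd_sb tranclp_into_rtranclp)

lemma rds_App2: "rds s s' \<Longrightarrow> rds (App t s) (App t s')" by (rule rtp_map1[where f="\<lambda>s. App t s"]) (auto intro: d_App2)
lemma rds_Lam: "rds t t' \<Longrightarrow> rds (Lam T t) (Lam T t')" by (rule rtp_map1[where f="Lam T"]) (auto intro: d_Lam)
lemma rds_Mu: "rdcs c c' \<Longrightarrow> rds (Mu T c) (Mu T c')" by (rule rtp_map1[where f="Mu T"]) (auto intro: d_Mu)
lemma rds_Nrec1: "rds r r' \<Longrightarrow> rds (Nrec R r s t) (Nrec R r' s t)" by (rule rtp_map1[where f="\<lambda>r. Nrec R r s t"]) (auto intro: d_Nrec1)
lemma rds_Nrec2: "rds s s' \<Longrightarrow> rds (Nrec R r s t) (Nrec R r s' t)" by (rule rtp_map1[where f="\<lambda>s. Nrec R r s t"]) (auto intro: d_Nrec2)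

lemma cs_App1: "ctxreds E E' \<Longrightarrow> ctxreds (CApp E t) (CApp E' t)" by (rule rtp_map1[where f="\<lambda>E. CApp E t"]) (auto intro: cr_App1)
lemma cs_App2: "rds t t' \<Longrightarrow> ctxreds (CApp E t) (CApp E t')" by (rule rtp_map1[where f="\<lambda>t. CApp E t"]) (auto intro: cr_App2)
lemma cs_Sc: "ctxreds E E' \<Longrightarrow> ctxreds (CSc E) (CSc E')" by (rule rtp_map1[where f="CSc"]) (auto intro: cr_Sc)
lemma cs_N1: "rds r r' \<Longrightarrow> ctxreds (CNrec R r s E) (CNrec R r' s E)" by (rule rtp_map1[where f="\<lambda>r. CNrec R r s E"]) (auto intro: cr_N1)
lemma cs_N2: "rds s s' \<Longrightarrow> ctxreds (CNrec R r s E) (CNrec R r s' E)" by (rule rtp_map1[where f="\<lambda>s. CNrec R r s E"]) (auto intro: cr_N2)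
lemma cs_N3: "ctxreds E E' \<Longrightarrow> ctxreds (CNrec R r s E) (CNrec R r s E')" by (rule rtp_map1[where f="\<lambda>E. CNrec R r s E"]) (auto intro: cr_N3)

lemma ctxred_sbx: "ctxred E E' \<Longrightarrow> ctxreds (sbx \<sigma> \<theta> E) (sbx \<sigma> \<theta> E')"
proof (induct rule: ctxred.induct)
  case (cr_App1 E E' t) then show ?case by (simp add: cs_App1)
next
  case (cr_App2 t t' E) then show ?case by (simp add: cs_App2 rds_sb[OF r_into_rtranclp])
next
  case (cr_Sc E E') then show ?case by (simp add: cs_Sc)
next
  case (cr_N1 r r' R s E) then show ?case by (simp add: cs_N1 rds_sb[OF r_into_rtranclp])
next
  case (cr_N2 s s' R r E) then show ?case by (simp add: cs_N2 rds_sb[OF r_into_rtranclp])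
next
  case (cr_N3 E E' R r s) then show ?case by (simp add: cs_N3)
qed
lemma ctxreds_sbx: "ctxreds E E' \<Longrightarrow> ctxreds (sbx \<sigma> \<theta> E) (sbx \<sigma> \<theta> E')"
  by (rule rtp_map[where f="sbx \<sigma> \<theta>"]) (auto intro: ctxred_sbx)

lemma rds_lren: "rds t t' \<Longrightarrow> rds (lren f t) (lren f t')" by (simp add: lren_sb_eq rds_sb)
lemma rds_mren: "rds t t' \<Longrightarrow> rds (mren f t) (mren f t')" by (simp add: mren_sb_eq rds_sb)
lemma cs_lren: "ctxreds E E' \<Longrightarrow> ctxreds (lren_ctx f E) (lren_ctx f E')" by (simp add: lren_ctx_sb_eq ctxreds_sbx)
lemma cs_mren: "ctxreds E E' \<Longrightarrow> ctxreds (mren_ctx f E) (mren_ctx f E')" by (simp add: mren_ctx_sb_eq ctxreds_sbx)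

lemma GM: "(\<forall>x. rds (\<sigma> x) (\<sigma>' x)) \<Longrightarrow> (\<forall>b. fst (\<theta> b) = fst (\<theta>' b) \<and> ctxreds (snd (\<theta> b)) (snd (\<theta>' b)))
   \<Longrightarrow> rds (sb \<sigma> \<theta> t) (sb \<sigma>' \<theta>' t)"
  "(\<forall>x. rds (\<sigma> x) (\<sigma>' x)) \<Longrightarrow> (\<forall>b. fst (\<theta> b) = fst (\<theta>' b) \<and> ctxreds (snd (\<theta> b)) (snd (\<theta>' b)))
   \<Longrightarrow> rdcs (sbc \<sigma> \<theta> c) (sbc \<sigma>' \<theta>' c)"
proof (induct t and c arbitrary: \<sigma> \<theta> \<sigma>' \<theta>' and \<sigma> \<theta> \<sigma>' \<theta>' rule: trm.induct cmd.induct)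
  case (Var x) then show ?case by simp
next
  case (Lam T t)
  have "\<forall>x. rds (upl \<sigma> x) (upl \<sigma>' x)"
  proof
    fix x show "rds (upl \<sigma> x) (upl \<sigma>' x)" using Lam.prems(1) by (cases x) (auto intro: rds_lren)
  qed
  moreover have "\<forall>b. fst ((\<lambda>b. (fst (\<theta> b), lren_ctx Suc (snd (\<theta> b)))) b) = fst ((\<lambda>b. (fst (\<theta>' b), lren_ctx Suc (snd (\<theta>' b)))) b)
     \<and> ctxreds (snd ((\<lambda>b. (fst (\<theta> b), lren_ctx Suc (snd (\<theta> b)))) b)) (snd ((\<lambda>b. (fst (\<theta>' b), lren_ctx Suc (snd (\<theta>' b)))) b))"
    using Lam.prems(2) by (auto intro: cs_lren)
  ultimately show ?case using Lam.hyps by (simp add: rds_Lam)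
next
  case (App t s)
  then have h1: "rds (sb \<sigma> \<theta> t) (sb \<sigma>' \<theta>' t)" and h2: "rds (sb \<sigma> \<theta> s) (sb \<sigma>' \<theta>' s)" by auto
  show ?case by simp (rule rtranclp_trans[OF rds_App1[OF h1] rds_App2[OF h2]])
next
  case (Mu T c)
  have "\<forall>x. rds ((\<lambda>i. mren Suc (\<sigma> i)) x) ((\<lambda>i. mren Suc (\<sigma>' i)) x)" using Mu.prems(1) by (auto intro: rds_mren)
  moreover have "\<forall>b. fst (thmu \<theta> b) = fst (thmu \<theta>' b) \<and> ctxreds (snd (thmu \<theta> b)) (snd (thmu \<theta>' b))"
  proof
    fix b show "fst (thmu \<theta> b) = fst (thmu \<theta>' b) \<and> ctxreds (snd (thmu \<theta> b)) (snd (thmu \<theta>' b))"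
      using Mu.prems(2) by (cases b) (auto intro: cs_mren)
  qed
  ultimately show ?case using Mu.hyps by (simp add: rds_Mu)
next
  case Zero then show ?case by simp
next
  case (Sc t) then show ?case by (simp add: rds_Sc)
next
  case (Nrec R r s t)
  then have h1: "rds (sb \<sigma> \<theta> r) (sb \<sigma>' \<theta>' r)" and h2: "rds (sb \<sigma> \<theta> s) (sb \<sigma>' \<theta>' s)"
    and h3: "rds (sb \<sigma> \<theta> t) (sb \<sigma>' \<theta>' t)" by auto
  show ?case by simp (rule rtranclp_trans[OF rtranclp_trans[OF rds_Nrec1[OF h1] rds_Nrec2[OF h2]] rds_Nrec3[OF h3]])
next
  case (Pass a t)
  then have h: "rds (sb \<sigma> \<theta> t) (sb \<sigma>' \<theta>' t)" by auto
  from Pass.prems(2) have e: "fst (\<theta> a) = fst (\<theta>' a)" and c: "ctxreds (snd (\<theta> a)) (snd (\<theta>' a))" by auto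
  have "rds (fill (snd (\<theta> a)) (sb \<sigma> \<theta> t)) (fill (snd (\<theta>' a)) (sb \<sigma>' \<theta>' t))"
    using ctxreds_fill[OF c] rds_fill[OF h] by (rule rtranclp_trans)
  then show ?case by (simp only: sbc.simps e) (rule rds_Pass)
qed



definition SN :: "trm \<Rightarrow> bool" where "SN = Wellfounded.accp (\<lambda>y x. rd x y)"
definition SNc :: "cmd \<Rightarrow> bool" where "SNc = Wellfounded.accp (\<lambda>y x. rdc x y)"
definition ctxSN :: "ctx \<Rightarrow> bool" where "ctxSN = Wellfounded.accp (\<lambda>y x. ctxred x y)"

lemma acc_down: "Wellfounded.accp (\<lambda>y x. r x y) x \<Longrightarrow> r x y \<Longrightarrow> Wellfounded.accp (\<lambda>y x. r x y) y"
  by (erule accp_downward) simp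
lemma acc_downs: "r\<^sup>*\<^sup>* x y \<Longrightarrow> Wellfounded.accp (\<lambda>y x. r x y) x \<Longrightarrow> Wellfounded.accp (\<lambda>y x. r x y) y"
  by (induct rule: rtranclp_induct) (auto intro: acc_down)
lemma acc_intro: "(\<And>y. r x y \<Longrightarrow> Wellfounded.accp (\<lambda>y x. r x y) y) \<Longrightarrow> Wellfounded.accp (\<lambda>y x. r x y) x"
  by (rule accp.accI) auto
lemma acc_trancl: "Wellfounded.accp (\<lambda>y x. r x y) x \<Longrightarrow> Wellfounded.accp (\<lambda>y x. r\<^sup>+\<^sup>+ x y) x"
proof (induct rule: accp.induct)
  case (accI x)
  show ?case
  proof (rule accp.accI)
    fix y assume "r\<^sup>+\<^sup>+ x y"
    then obtain w where w: "r x w" "r\<^sup>*\<^sup>* w y" by (auto dest: tranclpD)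
    then have aw: "Wellfounded.accp (\<lambda>y x. r\<^sup>+\<^sup>+ x y) w" using accI.hyps(2) by blast
    from w(2) show "Wellfounded.accp (\<lambda>y x. r\<^sup>+\<^sup>+ x y) y"
    proof (cases rule: rtranclp.cases)
      case rtrancl_refl then show ?thesis using aw by simp
    next
      case (rtrancl_into_rtrancl b)
      then have "r\<^sup>+\<^sup>+ w y" by (auto intro: rtranclp_into_tranclp1)
      then show ?thesis using accp_downward[OF aw, of y] by simp
    qed
  qed
qed

lemma acc_plus_induct:
  assumes a: "Wellfounded.accp (\<lambda>y x. r x y) x"
  and step: "\<And>x. (\<And>y. r\<^sup>+\<^sup>+ x y \<Longrightarrow> P y) \<Longrightarrow> P x"
  shows "P x"
  using acc_trancl[OF a]
proof (induct rule: accp.induct)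
  case (accI x) show ?case by (rule step) (rule accI.hyps(2), simp)
qed

lemma acc_image:
  assumes a: "Wellfounded.accp (\<lambda>y x. s x y) (g a)" and h: "\<And>x y. r x y \<Longrightarrow> s\<^sup>+\<^sup>+ (g x) (g y)"
  shows "Wellfounded.accp (\<lambda>y x. r x y) a"
proof -
  have "\<forall>a. g a = X \<longrightarrow> Wellfounded.accp (\<lambda>y x. r x y) a" if "Wellfounded.accp (\<lambda>y x. s x y) X" for X
    using acc_trancl[OF that]
  proof (induct rule: accp.induct)
    case (accI X)
    show ?case
    proof (intro allI impI)
      fix a assume "g a = X"
      show "Wellfounded.accp (\<lambda>y x. r x y) a"
      proof (rule acc_intro)
        fix y assume "r a y"
        then have "s\<^sup>+\<^sup>+ X (g y)" using h \<open>g a = X\<close> by auto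
        then show "Wellfounded.accp (\<lambda>y x. r x y) y" using accI.hyps(2) by auto
      qed
    qed
  qed
  then show ?thesis using a by auto
qed

lemma acc_image1:
  assumes a: "Wellfounded.accp (\<lambda>y x. s x y) (g a)" and h: "\<And>x y. r x y \<Longrightarrow> s (g x) (g y)"
  shows "Wellfounded.accp (\<lambda>y x. r x y) a"
  by (rule acc_image[where g=g and s=s, OF a]) (rule tranclp.r_into_trancl, erule h)

lemma acc_no_chain:
  "Wellfounded.accp (\<lambda>y x. r x y) x \<Longrightarrow> \<not> (\<exists>f. f 0 = x \<and> (\<forall>i. r (f i) (f (Suc i))))"
proof (induct rule: accp.induct)
  case (accI x)
  show ?case
  proof
    assume "\<exists>f. f 0 = x \<and> (\<forall>i. r (f i) (f (Suc i)))"
    then obtain f where f0: "f 0 = x" and fs: "\<forall>i. r (f i) (f (Suc i))" by blast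
    have "r x (f (Suc 0))" using spec[OF fs, of 0] f0 by simp
    then have "\<not> (\<exists>g. g 0 = f (Suc 0) \<and> (\<forall>i. r (g i) (g (Suc i))))" using accI.hyps(2) by blast
    moreover have "\<exists>g. g 0 = f (Suc 0) \<and> (\<forall>i. r (g i) (g (Suc i)))"
      by (rule exI[of _ "\<lambda>i. f (Suc i)"]) (simp add: fs)
    ultimately show False by blast
  qed
qed



lemma acc_plus_induct'[consumes 1, case_names step]:
  "Wellfounded.accp (\<lambda>y x. r x y) x \<Longrightarrow> (\<And>x. (\<And>y. r\<^sup>+\<^sup>+ x y \<Longrightarrow> P y) \<Longrightarrow> P x) \<Longrightarrow> P x"
  by (rule acc_plus_induct[of r x P]) blast+

lemma SN_intro: "(\<And>y. rd t y \<Longrightarrow> SN y) \<Longrightarrow> SN t" unfolding SN_def by (rule acc_intro)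
lemma SNc_intro: "(\<And>y. rdc t y \<Longrightarrow> SNc y) \<Longrightarrow> SNc t" unfolding SNc_def by (rule acc_intro)
lemma ctxSN_intro: "(\<And>y. ctxred t y \<Longrightarrow> ctxSN y) \<Longrightarrow> ctxSN t" unfolding ctxSN_def by (rule acc_intro)
lemma SN_down: "SN t \<Longrightarrow> rd t t' \<Longrightarrow> SN t'" unfolding SN_def by (rule acc_down)
lemma SN_downs: "SN t \<Longrightarrow> rds t t' \<Longrightarrow> SN t'" unfolding SN_def by (rule acc_downs)
lemma SNc_downs: "SNc t \<Longrightarrow> rdcs t t' \<Longrightarrow> SNc t'" unfolding SNc_def by (rule acc_downs)
lemma ctxSN_down: "ctxSN t \<Longrightarrow> ctxred t t' \<Longrightarrow> ctxSN t'" unfolding ctxSN_def by (rule acc_down)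

lemma SN_fill_sub: "SN (fill E u) \<Longrightarrow> SN u"
  unfolding SN_def by (rule acc_image1[where g="fill E" and r=rd and s=rd]) (auto intro: rd_fill)
lemma SN_fill_ctx: "SN (fill E u) \<Longrightarrow> ctxSN E"
  unfolding SN_def ctxSN_def by (rule acc_image1[where g="\<lambda>E. fill E u" and r=ctxred and s=rd]) (auto intro: ctxred_fill)
lemma SN_Mu_c: "SN (Mu T c) \<Longrightarrow> SNc c"
  unfolding SN_def SNc_def by (rule acc_image1[where g="Mu T" and r=rdc and s=rd]) (auto intro: d_Mu)
lemma SNc_Pass_t: "SNc (Pass a u) \<Longrightarrow> SN u"
  unfolding SN_def SNc_def by (rule acc_image1[where g="Pass a" and r=rd and s=rdc]) (auto intro: d_Pass)
lemma SN_sb_back: "SN (sb \<sigma> \<theta> t) \<Longrightarrow> SN t"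
  unfolding SN_def by (rule acc_image[where g="sb \<sigma> \<theta>" and r=rd and s=rd]) (auto intro: rd_sb)
lemma SN_mren_back: "SN (mren f t) \<Longrightarrow> SN t" by (simp add: mren_sb_eq SN_sb_back)
lemma SN_App_l: "SN (App t s) \<Longrightarrow> SN t"
  unfolding SN_def by (rule acc_image1[where g="\<lambda>t. App t s" and r=rd and s=rd]) (auto intro: d_App1)
lemma SN_App_r: "SN (App t s) \<Longrightarrow> SN s"
  unfolding SN_def by (rule acc_image1[where g="\<lambda>s. App t s" and r=rd and s=rd]) (auto intro: d_App2)

lemma ext_image_Suc: "(Suc a \<in> ext f ` S) = (a \<in> f ` {j. Suc j \<in> S})"
proof
  assume "Suc a \<in> ext f ` S"
  then obtain x where "x \<in> S" "Suc a = ext f x" by auto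
  then show "a \<in> f ` {j. Suc j \<in> S}" by (cases x) auto
next
  assume "a \<in> f ` {j. Suc j \<in> S}"
  then obtain j where "Suc j \<in> S" "a = f j" by auto
  then show "Suc a \<in> ext f ` S" by (auto intro: image_eqI[of _ _ "Suc j"])
qed

lemma FCV_mren: "FCV (mren f t) = f ` FCV t" "FCVc (mrenc f c) = f ` FCVc c"
proof (induct t and c arbitrary: f and f rule: trm.induct cmd.induct)
  case (Mu T c) then show ?case by (simp add: ext_image_Suc)
qed (simp_all add: image_Un)

lemma mren_Suc_inj: "mren Suc x = mren Suc y \<Longrightarrow> x = y"
proof -
  assume "mren Suc x = mren Suc y"
  then have "mren (\<lambda>i. i - 1) (mren Suc x) = mren (\<lambda>i. i - 1) (mren Suc y)" by simp
  then show ?thesis by simp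
qed

lemma mren_ext_eq_Suc: "mren (ext f) t0 = mren Suc w \<Longrightarrow> \<exists>w0. t0 = mren Suc w0 \<and> w = mren f w0"
proof -
  assume h: "mren (ext f) t0 = mren Suc w"
  have "0 \<notin> FCV (mren Suc w)" by (simp add: FCV_mren(1))
  moreover have "ext f ` FCV t0 = FCV (mren Suc w)" using h by (metis FCV_mren(1))
  ultimately have "0 \<notin> ext f ` FCV t0" by simp
  then have "0 \<notin> FCV t0" by (metis ext_0 imageI)
  then have e: "t0 = mren Suc (mren (\<lambda>i. i - 1) t0)" by (rule FCV_shift[symmetric])
  define w0 where "w0 = mren (\<lambda>i. i - 1) t0"
  have e': "t0 = mren Suc w0" using e unfolding w0_def .
  have "mren Suc w = mren Suc (mren f w0)" using h unfolding e' by simp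
  then have "w = mren f w0" by (rule mren_Suc_inj)
  then show ?thesis using e' by blast
qed

lemma mren_eq_num: "mren f t = num n \<Longrightarrow> t = num n"
  by (induct n arbitrary: t) (case_tac t, simp_all)+

lemma mren_subst0: "mren f (subst0 t r) = subst0 (mren f t) (mren f r)"
proof -
  have e1: "(\<lambda>a. mren f (cons0 r a)) = cons0 (mren f r)"
    apply (rule ext) subgoal for i by (cases i) simp_all done
  have e2: "(\<lambda>a. idth (f a)) = renth f" by (rule ext) (simp add: idth_app renth_app)
  show ?thesis by (simp only: subst0_sb_eq mren_sb sb_mren e1 e2 fst_idth snd_idth mren_ctx.simps thla_renth)
qed

lemma mren_ss: "mrenc (ext f) (ssubc 0 (mren_ctx Suc F) c) = ssubc 0 (mren_ctx Suc (mren_ctx f F)) (mrenc (ext f) c)"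
  using FL[of Var "renth f" F c] by (simp add: mren_sb_eq(2)[symmetric] mren_ctx_sb_eq[symmetric])

lemma mui_fun: "(\<lambda>x. f (case x of 0 \<Rightarrow> a | Suc j \<Rightarrow> j)) = (\<lambda>x. case ext f x of 0 \<Rightarrow> f a | Suc j \<Rightarrow> j)"
  apply (rule ext) subgoal for x by (cases x) simp_all done

lemma reflect: "rd (mren f u) v \<Longrightarrow> \<exists>u'. rd u u' \<and> v = mren f u'"
   "rdc (mrenc f c) w \<Longrightarrow> \<exists>c'. rdc c c' \<and> w = mrenc f c'"
proof (induct u and c arbitrary: f v and f w rule: trm.induct cmd.induct)
  case (Var x) from Var.prems show ?case by (cases rule: rd.cases) simp_all
next
  case (Lam T t)
  from Lam.prems show ?case
  proof (cases rule: rd.cases)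
    case (d_Lam t1 t1' T1)
    then have "rd (mren f t) t1'" by simp
    then obtain u' where "rd t u'" "t1' = mren f u'" using Lam.hyps by blast
    then show ?thesis using d_Lam by (intro exI[of _ "Lam T u'"]) (auto intro: rd_rdc.intros)
  qed simp_all
next
  case (App a b)
  from App.prems show ?case
  proof (cases rule: rd.cases)
    case (d_beta T t r)
    then obtain a0 where "a = Lam T a0" "t = mren f a0" by (cases a) auto
    then show ?thesis using d_beta by (auto intro: rd_rdc.intros simp: mren_subst0)
  next
    case (d_muR A c s B)
    then obtain c0 where a: "a = Mu A c0" "c = mrenc (ext f) c0" by (cases a) auto
    have "rd (App a b) (Mu B (ssubc 0 (CApp Hole (mren Suc b)) c0))" unfolding a by (rule rd_rdc.d_muR)
    moreover have "v = mren f (Mu B (ssubc 0 (CApp Hole (mren Suc b)) c0))"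
      using d_muR a mren_ss[of f "CApp Hole b" c0] by simp
    ultimately show ?thesis by blast
  next
    case (d_App1 t1 t1' s1)
    then have "rd (mren f a) t1'" by simp
    then obtain u' where "rd a u'" "t1' = mren f u'" using App.hyps(1) by blast
    then show ?thesis using d_App1 by (intro exI[of _ "App u' b"]) (auto intro: rd_rdc.intros)
  next
    case (d_App2 s1 s1' t1)
    then have "rd (mren f b) s1'" by simp
    then obtain u' where "rd b u'" "s1' = mren f u'" using App.hyps(2) by blast
    then show ?thesis using d_App2 by (intro exI[of _ "App a u'"]) (auto intro: rd_rdc.intros)
  qed simp_all
next
  case (Mu T c)
  from Mu.prems show ?case
  proof (cases rule: rd.cases)
    case (d_mueta T1)
    then obtain a t0 where c: "c = Pass a t0" by (cases c) auto
    with d_mueta have a0: "ext f a = 0" and h: "mren (ext f) t0 = mren Suc v" by auto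
    from a0 have "a = 0" by (cases a) auto
    obtain w0 where "t0 = mren Suc w0" "v = mren f w0" using mren_ext_eq_Suc[OF h] by blast
    then show ?thesis using d_mueta c \<open>a = 0\<close> by (auto intro: rd_rdc.intros)
  next
    case (d_Mu c1 c1' T1)
    then have "rdc (mrenc (ext f) c) c1'" by simp
    then obtain c'' where "rdc c c''" "c1' = mrenc (ext f) c''" using Mu.hyps by blast
    then show ?thesis using d_Mu by (intro exI[of _ "Mu T c''"]) (auto intro: rd_rdc.intros)
  qed simp_all
next
  case Zero from Zero.prems show ?case by (cases rule: rd.cases) simp_all
next
  case (Sc t)
  from Sc.prems show ?case
  proof (cases rule: rd.cases)
    case (d_muS T c)
    then obtain c0 where a: "t = Mu T c0" "c = mrenc (ext f) c0" by (cases t) auto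
    have "rd (Sc t) (Mu T (ssubc 0 (CSc Hole) c0))" unfolding a by (rule rd_rdc.d_muS)
    moreover have "v = mren f (Mu T (ssubc 0 (CSc Hole) c0))"
      using d_muS a mren_ss[of f "CSc Hole" c0] by simp
    ultimately show ?thesis by blast
  next
    case (d_Sc t1 t1')
    then have "rd (mren f t) t1'" by simp
    then obtain u' where "rd t u'" "t1' = mren f u'" using Sc.hyps by blast
    then show ?thesis using d_Sc by (intro exI[of _ "Sc u'"]) (auto intro: rd_rdc.intros)
  qed simp_all
next
  case (Nrec R r s t)
  from Nrec.prems show ?case
  proof (cases rule: rd.cases)
    case d_zero
    then have "t = Zero" by (cases t) auto
    then show ?thesis using d_zero by (auto intro: rd_rdc.intros)
  next
    case (d_suc R1 r1 s1 n)
    then obtain t0 where "t = Sc t0" "mren f t0 = num n" by (cases t) auto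
    then have "t = Sc (num n)" by (auto dest: mren_eq_num)
    then show ?thesis using d_suc by (auto intro: rd_rdc.intros)
  next
    case (d_muN R1 r1 s1 T c)
    then obtain c0 where a: "t = Mu T c0" "c = mrenc (ext f) c0" by (cases t) auto
    have "rd (Nrec R r s t) (Mu R (ssubc 0 (CNrec R (mren Suc r) (mren Suc s) Hole) c0))" unfolding a by (rule rd_rdc.d_muN)
    moreover have "v = mren f (Mu R (ssubc 0 (CNrec R (mren Suc r) (mren Suc s) Hole) c0))"
      using d_muN a mren_ss[of f "CNrec R r s Hole" c0] by simp
    ultimately show ?thesis by blast
  next
    case (d_Nrec1 r1 r1' R1 s1 t1)
    then have "rd (mren f r) r1'" by simp
    then obtain u' where "rd r u'" "r1' = mren f u'" using Nrec.hyps(1) by blast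
    then show ?thesis using d_Nrec1 by (intro exI[of _ "Nrec R u' s t"]) (auto intro: rd_rdc.intros)
  next
    case (d_Nrec2 s1 s1' R1 r1 t1)
    then have "rd (mren f s) s1'" by simp
    then obtain u' where "rd s u'" "s1' = mren f u'" using Nrec.hyps(2) by blast
    then show ?thesis using d_Nrec2 by (intro exI[of _ "Nrec R r u' t"]) (auto intro: rd_rdc.intros)
  next
    case (d_Nrec3 t1 t1' R1 r1 s1)
    then have "rd (mren f t) t1'" by simp
    then obtain u' where "rd t u'" "t1' = mren f u'" using Nrec.hyps(3) by blast
    then show ?thesis using d_Nrec3 by (intro exI[of _ "Nrec R r s u'"]) (auto intro: rd_rdc.intros)
  qed simp_all
next
  case (Pass a t)
  from Pass.prems show ?case
  proof (cases rule: rdc.cases)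
    case (d_mui a1 T c)
    then obtain c0 where a: "t = Mu T c0" "c = mrenc (ext f) c0" by (cases t) auto
    have "rdc (Pass a t) (mrenc (\<lambda>i. case i of 0 \<Rightarrow> a | Suc j \<Rightarrow> j) c0)" unfolding a by (rule rd_rdc.d_mui)
    moreover from d_mui have a1: "a1 = f a" by simp
    moreover have "w = mrenc f (mrenc (\<lambda>i. case i of 0 \<Rightarrow> a | Suc j \<Rightarrow> j) c0)"
      using d_mui a unfolding a1 by (simp add: mui_fun)
    ultimately show ?thesis by blast
  next
    case (d_Pass t1 t1' a1)
    then have "rd (mren f t) t1'" by simp
    then obtain u' where "rd t u'" "t1' = mren f u'" using Pass.hyps by blast
    then show ?thesis using d_Pass by (intro exI[of _ "Pass a u'"]) (auto intro: rd_rdc.intros)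
  qed
qed

lemma SN_mren: "SN u \<Longrightarrow> SN (mren f u)"
  unfolding SN_def
proof (induct rule: accp.induct)
  case (accI x)
  show ?case
  proof (rule acc_intro)
    fix y assume "rd (mren f x) y"
    then obtain u' where "rd x u'" "y = mren f u'" using reflect(1) by blast
    then show "Wellfounded.accp (\<lambda>y x. rd x y) y" using accI.hyps(2)[of u'] by simp
  qed
qed

lemma SNc_mren: "SNc c \<Longrightarrow> SNc (mrenc f c)"
  unfolding SNc_def
proof (induct rule: accp.induct)
  case (accI x)
  show ?case
  proof (rule acc_intro)
    fix y assume "rdc (mrenc f x) y"
    then obtain u' where "rdc x u'" "y = mrenc f u'" using reflect(2) by blast
    then show "Wellfounded.accp (\<lambda>y x. rdc x y) y" using accI.hyps(2)[of u'] by simp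
  qed
qed

lemma SN_Pass: "SN u \<Longrightarrow> SNc (Pass b u)"
  unfolding SN_def
proof (induct rule: accp.induct)
  case (accI u)
  show ?case
  proof (rule SNc_intro)
    fix y assume "rdc (Pass b u) y"
    then show "SNc y"
    proof (cases rule: rdc.cases)
      case (d_mui T c)
      have "SN u" unfolding SN_def by (rule accp.accI) (use accI.hyps(1) in auto)
      then have "SNc c" using d_mui by (auto intro: SN_Mu_c)
      then show ?thesis using d_mui by (auto intro: SNc_mren)
    next
      case (d_Pass t') then show ?thesis using accI.hyps(2) by auto
    qed
  qed
qed



lemma acc_plus_induct2[consumes 1, case_names step]:
  assumes a: "Wellfounded.accp (\<lambda>y x. r x y) x"
  and st: "\<And>x. Wellfounded.accp (\<lambda>y x. r x y) x \<Longrightarrow> (\<And>y. r\<^sup>+\<^sup>+ x y \<Longrightarrow> P y) \<Longrightarrow> P x"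
  shows "P x"
proof -
  have "Wellfounded.accp (\<lambda>y x. r x y) x \<longrightarrow> P x" using a
  proof (induct rule: acc_plus_induct')
    case (step x)
    show ?case
    proof
      assume ax: "Wellfounded.accp (\<lambda>y x. r x y) x"
      show "P x"
      proof (rule st[OF ax])
        fix y assume "r\<^sup>+\<^sup>+ x y"
        moreover then have "Wellfounded.accp (\<lambda>y x. r x y) y" using ax by (auto intro: acc_downs tranclp_into_rtranclp)
        ultimately show "P y" using step by blast
      qed
    qed
  qed
  then show ?thesis using a by blast
qed

definition neutral :: "trm \<Rightarrow> bool" where
  "neutral u = ((\<exists>x. u = Var x) \<or> (\<exists>a b. u = App a b) \<or> (\<exists>R r s t. u = Nrec R r s t))"

lemma fill_eq_num: "fill E u = num n \<Longrightarrow> \<exists>m. u = num m"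
proof (induct E arbitrary: n)
  case Hole then show ?case by auto
next
  case (CApp E t) then show ?case by (cases n) auto
next
  case (CSc E) then show ?case by (cases n) auto
next
  case (CNrec R r s E) then show ?case by (cases n) auto
qed

lemma nfill:
  assumes "neutral u"
  shows "fill E u \<noteq> Lam T t" "fill E u \<noteq> Mu T c" "fill E u \<noteq> Zero" "fill E u \<noteq> Sc (num n)"
proof -
  have nn: "\<forall>m. u \<noteq> num m" using assms by (auto simp: neutral_def)
  show "fill E u \<noteq> Zero" using fill_eq_num[of E u 0] nn by auto
  show "fill E u \<noteq> Sc (num n)" using fill_eq_num[of E u "Suc n"] nn by auto
  show "fill E u \<noteq> Lam T t" using assms by (cases E) (auto simp: neutral_def)
  show "fill E u \<noteq> Mu T c" using assms by (cases E) (auto simp: neutral_def)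
qed

lemma mfill: "fill E (Mu A c) \<noteq> Lam T t" "fill E (Mu A c) \<noteq> Zero" "fill E (Mu A c) \<noteq> Sc (num n)"
proof -
  show "fill E (Mu A c) \<noteq> Zero" using fill_eq_num[of E "Mu A c" 0] by auto
  show "fill E (Mu A c) \<noteq> Sc (num n)" using fill_eq_num[of E "Mu A c" "Suc n"] by auto
  show "fill E (Mu A c) \<noteq> Lam T t" by (cases E) auto
qed

lemma fill_Mu_eq: "fill E (Mu A c) = Mu B d \<Longrightarrow> E = Hole \<and> A = B \<and> c = d" by (cases E) auto

lemma neutral_simps[simp]: "neutral (Var x)" "neutral (App a b)" "neutral (Nrec R r s t)"
  by (auto simp: neutral_def)

lemma decomp_neutral: "rd (fill E u) v \<Longrightarrow> neutral u \<Longrightarrow>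
   (\<exists>u'. rd u u' \<and> v = fill E u') \<or> (\<exists>E'. ctxred E E' \<and> v = fill E' u)"
proof (induct E arbitrary: v)
  case Hole then show ?case by auto
next
  case (CApp E t)
  note nf = nfill[OF CApp.prems(2)]
  from CApp.prems(1) have "rd (App (fill E u) t) v" by simp
  then show ?case
  proof (cases rule: rd.cases)
    case d_App1
    then obtain t1' where r: "rd (fill E u) t1'" and v: "v = App t1' t" by auto
    from CApp.hyps[OF r CApp.prems(2)] show ?thesis
    proof
      assume "\<exists>u'. rd u u' \<and> t1' = fill E u'"
      then show ?thesis using v by auto
    next
      assume "\<exists>E'. ctxred E E' \<and> t1' = fill E' u"
      then obtain E' where "ctxred E E'" "t1' = fill E' u" by blast
      then show ?thesis using v by (auto intro: cr_App1)
    qed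
  next
    case d_App2 then show ?thesis by (auto intro: cr_App2)
  qed (use nf in auto)
next
  case (CSc E)
  note nf = nfill[OF CSc.prems(2)]
  from CSc.prems(1) have "rd (Sc (fill E u)) v" by simp
  then show ?case
  proof (cases rule: rd.cases)
    case d_Sc
    then obtain t1' where r: "rd (fill E u) t1'" and v: "v = Sc t1'" by auto
    from CSc.hyps[OF r CSc.prems(2)] show ?thesis
    proof
      assume "\<exists>u'. rd u u' \<and> t1' = fill E u'"
      then show ?thesis using v by auto
    next
      assume "\<exists>E'. ctxred E E' \<and> t1' = fill E' u"
      then obtain E' where "ctxred E E'" "t1' = fill E' u" by blast
      then show ?thesis using v by (auto intro: cr_Sc)
    qed
  qed (use nf in auto)
next
  case (CNrec R r s E)
  note nf = nfill[OF CNrec.prems(2)]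
  from CNrec.prems(1) have "rd (Nrec R r s (fill E u)) v" by simp
  then show ?case
  proof (cases rule: rd.cases)
    case d_Nrec3
    then obtain t1' where r: "rd (fill E u) t1'" and v: "v = Nrec R r s t1'" by auto
    from CNrec.hyps[OF r CNrec.prems(2)] show ?thesis
    proof
      assume "\<exists>u'. rd u u' \<and> t1' = fill E u'"
      then show ?thesis using v by auto
    next
      assume "\<exists>E'. ctxred E E' \<and> t1' = fill E' u"
      then obtain E' where "ctxred E E'" "t1' = fill E' u" by blast
      then show ?thesis using v by (auto intro: cr_N3)
    qed
  next
    case d_Nrec1 then show ?thesis by (auto intro: cr_N1)
  next
    case d_Nrec2 then show ?thesis by (auto intro: cr_N2)
  qed (use nf in auto)
qed

definition isframe :: "ctx \<Rightarrow> bool" where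
  "isframe F = ((\<exists>s. F = CApp Hole s) \<or> F = CSc Hole \<or> (\<exists>R r s. F = CNrec R r s Hole))"

lemma decomp_mu: "rd (fill E (Mu A c)) v \<Longrightarrow>
   (\<exists>c'. rdc c c' \<and> v = fill E (Mu A c')) \<or> (\<exists>w. c = Pass 0 (mren Suc w) \<and> v = fill E w)
   \<or> (\<exists>E'. ctxred E E' \<and> v = fill E' (Mu A c))
   \<or> (\<exists>E0 F B. E = cplug E0 F \<and> isframe F \<and> v = fill E0 (Mu B (ssubc 0 (mren_ctx Suc F) c)))"
proof (induct E arbitrary: v)
  case Hole
  from Hole have "rd (Mu A c) v" by simp
  then show ?case by (cases rule: rd.cases) auto
next
  case (CApp E t)
  from CApp.prems(1) have "rd (App (fill E (Mu A c)) t) v" by simp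
  then show ?case
  proof (cases rule: rd.cases)
    case d_App1
    then obtain t1' where r: "rd (fill E (Mu A c)) t1'" and v: "v = App t1' t" by auto
    from CApp.hyps[OF r] show ?thesis
    proof (elim disjE exE conjE)
      fix c' assume "rdc c c'" "t1' = fill E (Mu A c')" then show ?thesis using v by auto
    next
      fix w assume "c = Pass 0 (mren Suc w)" "t1' = fill E w" then show ?thesis using v by auto
    next
      fix E' assume "ctxred E E'" "t1' = fill E' (Mu A c)" then show ?thesis using v by (auto intro: cr_App1)
    next
      fix E0 F B assume "E = cplug E0 F" "isframe F" "t1' = fill E0 (Mu B (ssubc 0 (mren_ctx Suc F) c))"
      then have "CApp E t = cplug (CApp E0 t) F \<and> isframe F \<and> v = fill (CApp E0 t) (Mu B (ssubc 0 (mren_ctx Suc F) c))" using v by simp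
      then show ?thesis by blast
    qed
  next
    case d_App2 then show ?thesis by (auto intro: cr_App2)
  next
    case d_muR
    then obtain B' where e: "E = Hole" and v: "v = Mu B' (ssubc 0 (CApp Hole (mren Suc t)) c)" by (auto dest!: fill_Mu_eq)
    have "CApp E t = cplug Hole (CApp Hole t) \<and> isframe (CApp Hole t) \<and> v = fill Hole (Mu B' (ssubc 0 (mren_ctx Suc (CApp Hole t)) c))"
      using e v by (simp add: isframe_def)
    then show ?thesis by blast
  qed (use mfill in auto)
next
  case (CSc E)
  from CSc.prems(1) have "rd (Sc (fill E (Mu A c))) v" by simp
  then show ?case
  proof (cases rule: rd.cases)
    case d_Sc
    then obtain t1' where r: "rd (fill E (Mu A c)) t1'" and v: "v = Sc t1'" by auto
    from CSc.hyps[OF r] show ?thesis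
    proof (elim disjE exE conjE)
      fix c' assume "rdc c c'" "t1' = fill E (Mu A c')" then show ?thesis using v by auto
    next
      fix w assume "c = Pass 0 (mren Suc w)" "t1' = fill E w" then show ?thesis using v by auto
    next
      fix E' assume "ctxred E E'" "t1' = fill E' (Mu A c)" then show ?thesis using v by (auto intro: cr_Sc)
    next
      fix E0 F B assume "E = cplug E0 F" "isframe F" "t1' = fill E0 (Mu B (ssubc 0 (mren_ctx Suc F) c))"
      then have "CSc E = cplug (CSc E0) F \<and> isframe F \<and> v = fill (CSc E0) (Mu B (ssubc 0 (mren_ctx Suc F) c))" using v by simp
      then show ?thesis by blast
    qed
  next
    case d_muS
    then obtain B' where e: "E = Hole" and v: "v = Mu B' (ssubc 0 (CSc Hole) c)" by (auto dest!: fill_Mu_eq)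
    have "CSc E = cplug Hole (CSc Hole) \<and> isframe (CSc Hole) \<and> v = fill Hole (Mu B' (ssubc 0 (mren_ctx Suc (CSc Hole)) c))"
      using e v by (simp add: isframe_def)
    then show ?thesis by blast
  qed
next
  case (CNrec R r s E)
  from CNrec.prems(1) have "rd (Nrec R r s (fill E (Mu A c))) v" by simp
  then show ?case
  proof (cases rule: rd.cases)
    case d_Nrec3
    then obtain t1' where r: "rd (fill E (Mu A c)) t1'" and v: "v = Nrec R r s t1'" by auto
    from CNrec.hyps[OF r] show ?thesis
    proof (elim disjE exE conjE)
      fix c' assume "rdc c c'" "t1' = fill E (Mu A c')" then show ?thesis using v by auto
    next
      fix w assume "c = Pass 0 (mren Suc w)" "t1' = fill E w" then show ?thesis using v by auto
    next
      fix E' assume "ctxred E E'" "t1' = fill E' (Mu A c)" then show ?thesis using v by (auto intro: cr_N3)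
    next
      fix E0 F B assume "E = cplug E0 F" "isframe F" "t1' = fill E0 (Mu B (ssubc 0 (mren_ctx Suc F) c))"
      then have "CNrec R r s E = cplug (CNrec R r s E0) F \<and> isframe F \<and> v = fill (CNrec R r s E0) (Mu B (ssubc 0 (mren_ctx Suc F) c))" using v by simp
      then show ?thesis by blast
    qed
  next
    case d_Nrec1 then show ?thesis by (auto intro: cr_N1)
  next
    case d_Nrec2 then show ?thesis by (auto intro: cr_N2)
  next
    case d_muN
    then obtain B' where e: "E = Hole" and v: "v = Mu B' (ssubc 0 (CNrec R (mren Suc r) (mren Suc s) Hole) c)" by (auto dest!: fill_Mu_eq)
    have "CNrec R r s E = cplug Hole (CNrec R r s Hole) \<and> isframe (CNrec R r s Hole) \<and> v = fill Hole (Mu B' (ssubc 0 (mren_ctx Suc (CNrec R r s Hole)) c))"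
      using e v by (simp add: isframe_def)
    then show ?thesis by blast
  qed (use mfill in auto)
qed



fun cdepth :: "ctx \<Rightarrow> nat" where
  "cdepth Hole = 0"
| "cdepth (CApp E t) = Suc (cdepth E)"
| "cdepth (CSc E) = Suc (cdepth E)"
| "cdepth (CNrec R r s E) = Suc (cdepth E)"

lemma cdepth_cplug[simp]: "cdepth (cplug E F) = cdepth E + cdepth F" by (induct E) simp_all
lemma isframe_depth: "isframe F \<Longrightarrow> cdepth F = 1" by (auto simp: isframe_def)
lemma ctxred_depth: "ctxred E E' \<Longrightarrow> cdepth E' = cdepth E" by (induct rule: ctxred.induct) simp_all
lemma ctxred_cplug1: "ctxred E E' \<Longrightarrow> ctxred (cplug E F) (cplug E' F)"
  by (induct rule: ctxred.induct) (auto intro: ctxred.intros)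

lemma ctxSN_outer: "ctxSN (cplug E F) \<Longrightarrow> ctxSN E"
  unfolding ctxSN_def by (rule acc_image1[where g="\<lambda>E. cplug E F" and r=ctxred and s=ctxred]) (auto intro: ctxred_cplug1)

lemma ctxSN_induct[consumes 1, case_names step]:
  "ctxSN E \<Longrightarrow> (\<And>E. ctxSN E \<Longrightarrow> (\<And>E'. ctxred E E' \<Longrightarrow> P E') \<Longrightarrow> P E) \<Longrightarrow> P E"
  unfolding ctxSN_def
proof (induct rule: accp.induct)
  case (accI x)
  show ?case
  proof (rule accI.prems)
    show "Wellfounded.accp (\<lambda>y x. ctxred x y) x" by (rule accp.accI) (use accI.hyps(1) in auto)
    fix E' assume "ctxred x E'" then show "P E'" using accI.hyps(2) accI.prems by blast
  qed
qed

lemma SN_induct[consumes 1, case_names step]: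
  "SN t \<Longrightarrow> (\<And>t. SN t \<Longrightarrow> (\<And>t'. rd t t' \<Longrightarrow> P t') \<Longrightarrow> P t) \<Longrightarrow> P t"
  unfolding SN_def
proof (induct rule: accp.induct)
  case (accI x)
  show ?case
  proof (rule accI.prems)
    show "Wellfounded.accp (\<lambda>y x. rd x y) x" by (rule accp.accI) (use accI.hyps(1) in auto)
    fix E' assume "rd x E'" then show "P E'" using accI.hyps(2) accI.prems by blast
  qed
qed

lemma ctxred_cplug_dec: "ctxred (cplug E F) G \<Longrightarrow> (\<exists>E'. ctxred E E' \<and> G = cplug E' F) \<or> (\<exists>F'. ctxred F F' \<and> G = cplug E F')"
proof (induct E arbitrary: G)
  case Hole then show ?case by auto
next
  case (CApp E t)
  from CApp.prems have "ctxred (CApp (cplug E F) t) G" by simp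
  then show ?case
  proof (cases rule: ctxred.cases)
    case cr_App1
    then obtain G' where r: "ctxred (cplug E F) G'" and g: "G = CApp G' t" by auto
    from CApp.hyps[OF r] show ?thesis using g by (auto intro: ctxred.intros)
  next
    case cr_App2 then show ?thesis by (auto intro: ctxred.intros)
  qed
next
  case (CSc E)
  from CSc.prems have "ctxred (CSc (cplug E F)) G" by simp
  then show ?case
  proof (cases rule: ctxred.cases)
    case cr_Sc
    then obtain G' where r: "ctxred (cplug E F) G'" and g: "G = CSc G'" by auto
    from CSc.hyps[OF r] show ?thesis using g by (auto intro: ctxred.intros)
  qed
next
  case (CNrec R r s E)
  from CNrec.prems have "ctxred (CNrec R r s (cplug E F)) G" by simp
  then show ?case
  proof (cases rule: ctxred.cases)
    case cr_N3
    then obtain G' where r: "ctxred (cplug E F) G'" and g: "G = CNrec R r s G'" by auto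
    from CNrec.hyps[OF r] show ?thesis using g by (auto intro: ctxred.intros)
  next
    case cr_N1 then show ?thesis by (auto intro: ctxred.intros)
  next
    case cr_N2 then show ?thesis by (auto intro: ctxred.intros)
  qed
qed

lemma ctxSN_cplug: "ctxSN E \<Longrightarrow> ctxSN F \<Longrightarrow> ctxSN (cplug E F)"
proof (induct E arbitrary: F rule: ctxSN_induct)
  case (step E)
  note IHE = step.hyps(2)
  from step.prems show ?case
  proof (induct F rule: ctxSN_induct)
    case (step F)
    show ?case
    proof (rule ctxSN_intro)
      fix G assume "ctxred (cplug E F) G"
      from ctxred_cplug_dec[OF this] show "ctxSN G"
      proof (elim disjE exE conjE)
        fix E' assume "ctxred E E'" "G = cplug E' F" then show ?thesis using IHE[of E'] step.hyps(1) by simp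
      next
        fix F' assume "ctxred F F'" "G = cplug E F'" then show ?thesis using step.hyps(2)[of F'] by simp
      qed
    qed
  qed
qed

lemma ctxSN_Hole: "ctxSN Hole" by (rule ctxSN_intro) (auto elim: ctxred.cases)

lemma ctxSN_app: "SN s \<Longrightarrow> ctxSN (CApp Hole s)"
proof (induct rule: SN_induct)
  case (step s)
  show ?case
  proof (rule ctxSN_intro)
    fix G assume "ctxred (CApp Hole s) G"
    then show "ctxSN G" by (cases rule: ctxred.cases) (auto elim: ctxred.cases intro: step.hyps(2))
  qed
qed

lemma rd_Var_inv: "rd (Var x) w \<Longrightarrow> False" by (auto elim: rd.cases)
lemma rd_Zero_inv: "rd Zero w \<Longrightarrow> False" by (auto elim: rd.cases)
lemma rd_Lam_inv: "rd (Lam T b) w \<Longrightarrow> \<exists>b'. w = Lam T b' \<and> rd b b'" by (auto elim: rd.cases)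
lemma rd_Scnum_inv: "rd (Sc (num n)) w \<Longrightarrow> False" using num_nf[of "Suc n" w] by simp

lemma SN_fill_var: "ctxSN E \<Longrightarrow> SN (fill E (Var x))"
proof (induct rule: ctxSN_induct)
  case (step E)
  show ?case
  proof (rule SN_intro)
    fix v assume "rd (fill E (Var x)) v"
    from decomp_neutral[OF this neutral_simps(1)] show "SN v"
      using step.hyps(2) by (auto dest: rd_Var_inv)
  qed
qed

lemma subst0_rdp: "rd b b' \<Longrightarrow> rdp (subst0 b s) (subst0 b' s)"
  by (simp add: subst0_sb_eq rd_sb)
lemma subst0_rds: "rd s s' \<Longrightarrow> rds (subst0 b s) (subst0 b s')"
  unfolding subst0_sb_eq
proof (rule GM(1))
  assume "rd s s'"
  then show "\<forall>x. rds (cons0 s x) (cons0 s' x)" by (auto simp: cons0_def split: nat.split)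
  show "\<forall>b. fst (idth b) = fst (idth b) \<and> ctxreds (snd (idth b)) (snd (idth b))" by simp
qed

lemma HB: "SN s \<Longrightarrow> SN (fill E (subst0 b s)) \<Longrightarrow> SN (fill E (App (Lam T b) s))"
proof (induct s arbitrary: E b rule: SN_induct)
  case (step s)
  have "\<forall>E b. X = fill E (subst0 b s) \<longrightarrow> SN (fill E (App (Lam T b) s))" if "SN X" for X
    using that[unfolded SN_def]
  proof (induct rule: acc_plus_induct2)
    case (step X)
    have snX: "SN X" unfolding SN_def by (rule step.hyps(1))
    show ?case
    proof (intro allI impI)
      fix E b assume X: "X = fill E (subst0 b s)"
      show "SN (fill E (App (Lam T b) s))"
      proof (rule SN_intro)
        fix v assume "rd (fill E (App (Lam T b) s)) v"
        from decomp_neutral[OF this neutral_simps(2)] show "SN v"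
        proof (elim disjE exE conjE)
          fix u' assume r: "rd (App (Lam T b) s) u'" and v: "v = fill E u'"
          from r show "SN v"
          proof (cases rule: rd.cases)
            case d_beta then show ?thesis using snX X v by simp
          next
            case d_App1
            then obtain w where "rd (Lam T b) w" "u' = App w s" by auto
            then obtain b' where rb: "rd b b'" and u': "u' = App (Lam T b') s" by (auto dest: rd_Lam_inv)
            have "rdp X (fill E (subst0 b' s))" unfolding X by (rule rdp_fill[OF subst0_rdp[OF rb]])
            then show ?thesis using step.hyps(2) v u' by blast
          next
            case d_App2
            then obtain s' where rs: "rd s s'" and u': "u' = App (Lam T b) s'" by auto
            have "SN (fill E (subst0 b s'))" using SN_downs[OF snX] X rds_fill[OF subst0_rds[OF rs]] by simp
            then show ?thesis using \<open>\<And>t' E b. rd s t' \<Longrightarrow> SN (fill E (subst0 b t')) \<Longrightarrow> SN (fill E (App (Lam T b) t'))\<close>[OF rs] v u' by simp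
          qed
        next
          fix E' assume ce: "ctxred E E'" and v: "v = fill E' (App (Lam T b) s)"
          have "rdp X (fill E' (subst0 b s))" unfolding X using ctxred_fill[OF ce] by auto
          then show "SN v" using step.hyps(2) v by blast
        qed
      qed
    qed
  qed
  then show ?case using step.prems by blast
qed



lemma HZ: "SN s \<Longrightarrow> SN (fill E r) \<Longrightarrow> SN (fill E (Nrec R r s Zero))"
proof (induct s arbitrary: E r rule: SN_induct)
  case (step s)
  note IHs = step.hyps(2)
  have "\<forall>E r. X = fill E r \<longrightarrow> SN (fill E (Nrec R r s Zero))" if "SN X" for X
    using that
  proof (induct rule: SN_induct)
    case (step X)
    show ?case
    proof (intro allI impI)
      fix E r assume X: "X = fill E r"
      show "SN (fill E (Nrec R r s Zero))"
      proof (rule SN_intro)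
        fix v assume "rd (fill E (Nrec R r s Zero)) v"
        from decomp_neutral[OF this neutral_simps(3)] show "SN v"
        proof (elim disjE exE conjE)
          fix u' assume rr: "rd (Nrec R r s Zero) u'" and v: "v = fill E u'"
          from rr show "SN v"
          proof (cases rule: rd.cases)
            case d_zero then show ?thesis using step.hyps(1) X v by simp
          next
            case d_Nrec1
            then obtain r' where rr': "rd r r'" and u': "u' = Nrec R r' s Zero" by auto
            have "rd X (fill E r')" unfolding X by (rule rd_fill[OF rr'])
            then show ?thesis using step.hyps(2) v u' by blast
          next
            case d_Nrec2
            then obtain s' where rs: "rd s s'" and u': "u' = Nrec R r s' Zero" by auto
            show ?thesis using IHs[OF rs] step.hyps(1) X v u' by simp
          next
            case d_Nrec3 then show ?thesis by (auto dest: rd_Zero_inv)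
          qed
        next
          fix E' assume ce: "ctxred E E'" and v: "v = fill E' (Nrec R r s Zero)"
          have "rd X (fill E' r)" unfolding X by (rule ctxred_fill[OF ce])
          then show "SN v" using step.hyps(2) v by blast
        qed
      qed
    qed
  qed
  then show ?case using step.prems by blast
qed

lemma HS: "SN (fill E (App (App s (num n)) (Nrec R r s (num n)))) \<Longrightarrow> SN (fill E (Nrec R r s (Sc (num n))))"
proof -
  have "\<forall>E r s. X = fill E (App (App s (num n)) (Nrec R r s (num n))) \<longrightarrow> SN (fill E (Nrec R r s (Sc (num n))))"
    if "SN X" for X
    using that[unfolded SN_def]
  proof (induct rule: acc_plus_induct2)
    case (step X)
    have snX: "SN X" unfolding SN_def by (rule step.hyps(1))
    show ?case
    proof (intro allI impI)
      fix E r s assume X: "X = fill E (App (App s (num n)) (Nrec R r s (num n)))"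
      show "SN (fill E (Nrec R r s (Sc (num n))))"
      proof (rule SN_intro)
        fix v assume "rd (fill E (Nrec R r s (Sc (num n)))) v"
        from decomp_neutral[OF this neutral_simps(3)] show "SN v"
        proof (elim disjE exE conjE)
          fix u' assume rr: "rd (Nrec R r s (Sc (num n))) u'" and v: "v = fill E u'"
          from rr show "SN v"
          proof (cases rule: rd.cases)
            case d_suc then show ?thesis using snX X v by simp
          next
            case d_Nrec1
            then obtain r' where rr': "rd r r'" and u': "u' = Nrec R r' s (Sc (num n))" by auto
            have "rd X (fill E (App (App s (num n)) (Nrec R r' s (num n))))" unfolding X
              by (rule rd_fill) (intro rd_rdc.d_App2 rd_rdc.d_Nrec1 rr')
            then show ?thesis using step.hyps(2) v u' by blast
          next
            case d_Nrec2
            then obtain s' where rs: "rd s s'" and u': "u' = Nrec R r s' (Sc (num n))" by auto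
            have "rd (App (App s (num n)) (Nrec R r s (num n))) (App (App s' (num n)) (Nrec R r s (num n)))"
              by (intro rd_rdc.d_App1 rs)
            moreover have "rd (App (App s' (num n)) (Nrec R r s (num n))) (App (App s' (num n)) (Nrec R r s' (num n)))"
              by (intro rd_rdc.d_App2 rd_rdc.d_Nrec2 rs)
            ultimately have "rdp (App (App s (num n)) (Nrec R r s (num n))) (App (App s' (num n)) (Nrec R r s' (num n)))"
              by auto
            then have "rdp X (fill E (App (App s' (num n)) (Nrec R r s' (num n))))" unfolding X by (rule rdp_fill)
            then show ?thesis using step.hyps(2) v u' by blast
          next
            case d_Nrec3 then show ?thesis by (auto dest: rd_Scnum_inv)
          qed
        next
          fix E' assume ce: "ctxred E E'" and v: "v = fill E' (Nrec R r s (Sc (num n)))"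
          have "rd X (fill E' (App (App s (num n)) (Nrec R r s (num n))))" unfolding X by (rule ctxred_fill[OF ce])
          then show "SN v" using step.hyps(2) v by blast
        qed
      qed
    qed
  qed
  then show "SN (fill E (App (App s (num n)) (Nrec R r s (num n)))) \<Longrightarrow> SN (fill E (Nrec R r s (Sc (num n))))" by blast
qed



lemma ss_rdcp: "rdc c c' \<Longrightarrow> rdcp (ssubc 0 F c) (ssubc 0 F c')" by (simp add: ssub_sb_eq rd_sb)

lemma ss_ctx_rdcs: "ctxred E E' \<Longrightarrow> rdcs (ssubc 0 (mren_ctx Suc E) c) (ssubc 0 (mren_ctx Suc E') c)"
  unfolding ssub_sb_eq
proof (rule GM(2))
  assume ce: "ctxred E E'"
  show "\<forall>x. rds (Var x) (Var x)" by simp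
  show "\<forall>b. fst (ssth 0 (mren_ctx Suc E) b) = fst (ssth 0 (mren_ctx Suc E') b) \<and>
            ctxreds (snd (ssth 0 (mren_ctx Suc E) b)) (snd (ssth 0 (mren_ctx Suc E') b))"
    using cs_mren[OF r_into_rtranclp[of ctxred, OF ce]] by simp
qed

lemma ss_eta: "ssubc 0 (mren_ctx Suc E) (Pass 0 (mren Suc w)) = Pass 0 (mren Suc (fill E w))"
  by (simp add: ssub_sb_eq(1))

lemma ss_frame: "ssubc 0 (mren_ctx Suc E0) (ssubc 0 (mren_ctx Suc F) c) = ssubc 0 (mren_ctx Suc (cplug E0 F)) c"
  by (simp add: comp_ss)

lemma HM_inner:
  assumes snX: "SNc X"
  and IHo: "\<forall>Y E c A. rdcp X Y \<longrightarrow> Y = ssubc 0 (mren_ctx Suc E) c \<longrightarrow> ctxSN E \<longrightarrow> SN (fill E (Mu A c))"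
  and IHd: "\<forall>E c A. cdepth E < d \<longrightarrow> X = ssubc 0 (mren_ctx Suc E) c \<longrightarrow> ctxSN E \<longrightarrow> SN (fill E (Mu A c))"
  shows "ctxSN E \<Longrightarrow> cdepth E = d \<Longrightarrow> X = ssubc 0 (mren_ctx Suc E) c \<Longrightarrow> SN (fill E (Mu A c))"
proof (induct E arbitrary: c A rule: ctxSN_induct)
  case (step E)
  show ?case
  proof (rule SN_intro)
    fix v assume "rd (fill E (Mu A c)) v"
    from decomp_mu[OF this] show "SN v"
    proof (elim disjE exE conjE)
      fix c' assume rc: "rdc c c'" and v: "v = fill E (Mu A c')"
      have "rdcp X (ssubc 0 (mren_ctx Suc E) c')" using step.prems(2) ss_rdcp[OF rc] by simp
      then show "SN v" using IHo step.hyps(1) v by blast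
    next
      fix w assume c: "c = Pass 0 (mren Suc w)" and v: "v = fill E w"
      have "SNc (Pass 0 (mren Suc (fill E w)))" using snX step.prems(2) c ss_eta by simp
      then have "SN (mren Suc (fill E w))" by (rule SNc_Pass_t)
      then show "SN v" using v SN_mren_back[of Suc "fill E w"] by simp
    next
      fix E' assume ce: "ctxred E E'" and v: "v = fill E' (Mu A c)"
      have rs: "rdcs X (ssubc 0 (mren_ctx Suc E') c)" using step.prems(2) ss_ctx_rdcs[OF ce] by simp
      have cs': "ctxSN E'" using step.hyps(1) ce by (rule ctxSN_down)
      from rs have "X = ssubc 0 (mren_ctx Suc E') c \<or> rdcp X (ssubc 0 (mren_ctx Suc E') c)"
        by (auto dest: rtranclpD)
      then show "SN v"
      proof
        assume "X = ssubc 0 (mren_ctx Suc E') c"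
        moreover have "cdepth E' = d" using ctxred_depth[OF ce] step.prems(1) by simp
        ultimately show ?thesis using step.hyps(2)[OF ce] v by blast
      next
        assume "rdcp X (ssubc 0 (mren_ctx Suc E') c)"
        then show ?thesis using IHo cs' v by blast
      qed
    next
      fix E0 F B assume e: "E = cplug E0 F" and fr: "isframe F" and v: "v = fill E0 (Mu B (ssubc 0 (mren_ctx Suc F) c))"
      have "X = ssubc 0 (mren_ctx Suc E0) (ssubc 0 (mren_ctx Suc F) c)" using step.prems(2) e by (simp add: ss_frame)
      moreover have "cdepth E0 < d" using step.prems(1) e isframe_depth[OF fr] by simp
      moreover have "ctxSN E0" using step.hyps(1) e ctxSN_outer by blast
      ultimately show "SN v" using IHd v by blast
    qed
  qed
qed

lemma HM_d:
  assumes snX: "SNc X"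
  and IHo: "\<forall>Y E c A. rdcp X Y \<longrightarrow> Y = ssubc 0 (mren_ctx Suc E) c \<longrightarrow> ctxSN E \<longrightarrow> SN (fill E (Mu A c))"
  shows "cdepth E = d \<Longrightarrow> X = ssubc 0 (mren_ctx Suc E) c \<Longrightarrow> ctxSN E \<Longrightarrow> SN (fill E (Mu A c))"
proof (induct d arbitrary: E c A rule: less_induct)
  case (less d)
  have IHd: "\<forall>E c A. cdepth E < d \<longrightarrow> X = ssubc 0 (mren_ctx Suc E) c \<longrightarrow> ctxSN E \<longrightarrow> SN (fill E (Mu A c))"
    using less.hyps by blast
  show ?case using HM_inner[OF snX IHo IHd] less.prems by blast
qed

lemma HM: "SNc (ssubc 0 (mren_ctx Suc E) c) \<Longrightarrow> ctxSN E \<Longrightarrow> SN (fill E (Mu A c))"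
proof -
  have "\<forall>E c A. X = ssubc 0 (mren_ctx Suc E) c \<longrightarrow> ctxSN E \<longrightarrow> SN (fill E (Mu A c))" if "SNc X" for X
    using that[unfolded SNc_def]
  proof (induct rule: acc_plus_induct2)
    case (step X)
    have snX: "SNc X" unfolding SNc_def by (rule step.hyps(1))
    have IHo: "\<forall>Y E c A. rdcp X Y \<longrightarrow> Y = ssubc 0 (mren_ctx Suc E) c \<longrightarrow> ctxSN E \<longrightarrow> SN (fill E (Mu A c))"
      using step.hyps(2) by blast
    show ?case using HM_d[OF snX IHo] by blast
  qed
  then show "SNc (ssubc 0 (mren_ctx Suc E) c) \<Longrightarrow> ctxSN E \<Longrightarrow> SN (fill E (Mu A c))" by blast
qed



fun K :: "ty \<Rightarrow> ctx set" where
  "K Nat = {E. \<forall>n. SN (fill E (num n))}"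
| "K (Arr S T) = {cplug E (CApp Hole s) | E s. E \<in> K T \<and> (\<forall>f E'. E' \<in> K S \<longrightarrow> SN (fill E' (mren f s)))}"

definition R :: "ty \<Rightarrow> trm set" where "R T = {t. \<forall>f E. E \<in> K T \<longrightarrow> SN (fill E (mren f t))}"

lemma K_Arr: "K (Arr S T) = {cplug E (CApp Hole s) | E s. E \<in> K T \<and> s \<in> R S}" by (simp add: R_def)
declare K.simps(2)[simp del]

lemma RI: "(\<And>f E. E \<in> K T \<Longrightarrow> SN (fill E (mren f t))) \<Longrightarrow> t \<in> R T" by (simp add: R_def)
lemma RD: "t \<in> R T \<Longrightarrow> E \<in> K T \<Longrightarrow> SN (fill E t)"
  unfolding R_def using mren_id(1) by (metis (no_types, lifting) mem_Collect_eq)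
lemma R_mren: "t \<in> R T \<Longrightarrow> mren g t \<in> R T" by (simp add: R_def)

lemma SN_num: "SN (num n)" by (rule SN_intro) (auto dest: num_nf)

lemma K_mren: "E \<in> K T \<Longrightarrow> mren_ctx f E \<in> K T"
proof (induct T arbitrary: E)
  case Nat
  then show ?case using SN_mren[of "fill E (num _)" f] by simp
next
  case (Arr S T)
  then obtain E0 s where e: "E = cplug E0 (CApp Hole s)" and e0: "E0 \<in> K T" and s: "s \<in> R S" by (auto simp: K_Arr)
  have a: "mren_ctx f E0 \<in> K T" using Arr.hyps(2)[OF e0] .
  have b: "mren f s \<in> R S" using s by (rule R_mren)
  have "mren_ctx f E = cplug (mren_ctx f E0) (CApp Hole (mren f s))" using e by simp
  then show ?case unfolding K_Arr using a b by blast
qed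

lemma props: "(\<forall>E \<in> K T. ctxSN E) \<and> K T \<noteq> {} \<and> (\<forall>t \<in> R T. SN t) \<and> (\<forall>x. Var x \<in> R T)"
proof (induct T)
  case Nat
  have c: "\<forall>E \<in> K Nat. ctxSN E" using SN_fill_ctx by auto
  moreover have h: "Hole \<in> K Nat" using SN_num by simp
  moreover have "\<forall>t \<in> R Nat. SN t" using RD[OF _ h] by simp
  moreover have "\<forall>x. Var x \<in> R Nat" using c by (auto intro!: RI SN_fill_var)
  ultimately show ?case by blast
next
  case (Arr S T)
  have c: "\<forall>E \<in> K (Arr S T). ctxSN E" using Arr by (auto simp: K_Arr intro!: ctxSN_cplug ctxSN_app)
  obtain E0 where e0: "E0 \<in> K T" using Arr.hyps(2) by blast
  have v0: "Var 0 \<in> R S" using Arr.hyps(1) by blast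
  have h: "cplug E0 (CApp Hole (Var 0)) \<in> K (Arr S T)" using e0 v0 by (auto simp: K_Arr)
  moreover have "\<forall>t \<in> R (Arr S T). SN t"
  proof
    fix t assume "t \<in> R (Arr S T)"
    then have "SN (fill (cplug E0 (CApp Hole (Var 0))) t)" using RD h by blast
    then show "SN t" by (auto dest: SN_fill_sub SN_App_l)
  qed
  moreover have "\<forall>x. Var x \<in> R (Arr S T)" using c by (auto intro!: RI SN_fill_var)
  ultimately show ?case using c by blast
qed

lemma R_SN: "t \<in> R T \<Longrightarrow> SN t" using props by blast
lemma K_ctxSN: "E \<in> K T \<Longrightarrow> ctxSN E" using props by blast
lemma K_ne: "\<exists>E. E \<in> K T" using props by blast
lemma Var_R: "Var x \<in> R T" using props by blast

lemma app_R: "t \<in> R (Arr S T) \<Longrightarrow> u \<in> R S \<Longrightarrow> App t u \<in> R T"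
proof (rule RI)
  fix f E assume t: "t \<in> R (Arr S T)" and u: "u \<in> R S" and E: "E \<in> K T"
  have "cplug E (CApp Hole (mren f u)) \<in> K (Arr S T)" using E R_mren[OF u] by (auto simp: K_Arr)
  then have "SN (fill (cplug E (CApp Hole (mren f u))) (mren f t))" using RD[OF R_mren[OF t]] by blast
  then show "SN (fill E (mren f (App t u)))" by simp
qed

lemma lam_R: "(\<And>f s. s \<in> R S \<Longrightarrow> subst0 (mren f b) s \<in> R T) \<Longrightarrow> Lam A b \<in> R (Arr S T)"
proof (rule RI)
  fix f E assume h: "\<And>f s. s \<in> R S \<Longrightarrow> subst0 (mren f b) s \<in> R T" and E: "E \<in> K (Arr S T)"
  then obtain E0 s where e: "E = cplug E0 (CApp Hole s)" and E0: "E0 \<in> K T" and s: "s \<in> R S" by (auto simp: K_Arr)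
  have "SN (fill E0 (App (Lam A (mren f b)) s))"
    by (rule HB[OF R_SN[OF s] RD[OF h[OF s] E0]])
  then show "SN (fill E (mren f (Lam A b)))" using e by simp
qed

lemma num_R: "num n \<in> R Nat" by (rule RI) simp

lemma sc_R: "t \<in> R Nat \<Longrightarrow> Sc t \<in> R Nat"
proof (rule RI)
  fix f E assume t: "t \<in> R Nat" and E: "E \<in> K Nat"
  have "cplug E (CSc Hole) \<in> K Nat" using E by simp (metis num.simps(2))
  then have "SN (fill (cplug E (CSc Hole)) (mren f t))" using RD[OF R_mren[OF t]] by blast
  then show "SN (fill E (mren f (Sc t)))" by simp
qed

lemma nrec_num_R: "r \<in> R T \<Longrightarrow> s \<in> R (Arr Nat (Arr T T)) \<Longrightarrow> Nrec A r s (num n) \<in> R T"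
proof (induct n arbitrary: r s)
  case 0
  show ?case
  proof (rule RI)
    fix f E assume E: "E \<in> K T"
    have "SN (fill E (Nrec A (mren f r) (mren f s) Zero))"
      by (rule HZ[OF R_SN[OF R_mren[OF 0(2)]] RD[OF R_mren[OF 0(1)] E]])
    then show "SN (fill E (mren f (Nrec A r s (num 0))))" by simp
  qed
next
  case (Suc n)
  show ?case
  proof (rule RI)
    fix f E assume E: "E \<in> K T"
    have r': "mren f r \<in> R T" and s': "mren f s \<in> R (Arr Nat (Arr T T))" using Suc.prems R_mren by auto
    have "App (App (mren f s) (num n)) (Nrec A (mren f r) (mren f s) (num n)) \<in> R T"
      by (rule app_R[OF app_R[OF s' num_R] Suc.hyps[OF r' s']])
    then have "SN (fill E (App (App (mren f s) (num n)) (Nrec A (mren f r) (mren f s) (num n))))" using RD E by blast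
    then have "SN (fill E (Nrec A (mren f r) (mren f s) (Sc (num n))))" by (rule HS)
    then show "SN (fill E (mren f (Nrec A r s (num (Suc n)))))" by simp
  qed
qed

lemma nrec_R: "r \<in> R T \<Longrightarrow> s \<in> R (Arr Nat (Arr T T)) \<Longrightarrow> t \<in> R Nat \<Longrightarrow> Nrec A r s t \<in> R T"
proof (rule RI)
  fix f E assume r: "r \<in> R T" and s: "s \<in> R (Arr Nat (Arr T T))" and t: "t \<in> R Nat" and E: "E \<in> K T"
  have "cplug E (CNrec A (mren f r) (mren f s) Hole) \<in> K Nat"
    using RD[OF nrec_num_R[OF R_mren[OF r] R_mren[OF s]] E] by simp
  then have "SN (fill (cplug E (CNrec A (mren f r) (mren f s) Hole)) (mren f t))" using RD[OF R_mren[OF t]] by blast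
  then show "SN (fill E (mren f (Nrec A r s t)))" by simp
qed

lemma mu_R: "(\<And>f E. E \<in> K T \<Longrightarrow> SNc (ssubc 0 (mren_ctx Suc E) (mrenc (ext f) c))) \<Longrightarrow> Mu A c \<in> R T"
proof (rule RI)
  fix f E assume h: "\<And>f E. E \<in> K T \<Longrightarrow> SNc (ssubc 0 (mren_ctx Suc E) (mrenc (ext f) c))" and E: "E \<in> K T"
  have "SN (fill E (Mu A (mrenc (ext f) c)))" by (rule HM[OF h[OF E] K_ctxSN[OF E]])
  then show "SN (fill E (mren f (Mu A c)))" by simp
qed



definition valid :: "(nat \<Rightarrow> ty) \<Rightarrow> (nat \<Rightarrow> ty) \<Rightarrow> (nat \<Rightarrow> trm) \<Rightarrow> (nat \<Rightarrow> nat \<times> ctx) \<Rightarrow> bool" where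
  "valid \<Gamma> \<Delta> \<sigma> \<theta> = ((\<forall>x. \<sigma> x \<in> R (\<Gamma> x)) \<and> (\<forall>b. snd (\<theta> b) \<in> K (\<Delta> b)))"

definition scons :: "trm \<Rightarrow> (nat \<Rightarrow> trm) \<Rightarrow> nat \<Rightarrow> trm" where
  "scons s \<sigma> = (\<lambda>i. case i of 0 \<Rightarrow> s | Suc j \<Rightarrow> \<sigma> j)"

lemma lam_eq:
  "subst0 (mren f (sb (upl \<sigma>) (\<lambda>b. (fst (\<theta> b), lren_ctx Suc (snd (\<theta> b)))) t)) s
   = sb (scons s (\<lambda>x. mren f (\<sigma> x))) (\<lambda>b. (f (fst (\<theta> b)), mren_ctx f (snd (\<theta> b)))) t"
proof -
  have L: "subst0 (mren f (sb (upl \<sigma>) (\<lambda>b. (fst (\<theta> b), lren_ctx Suc (snd (\<theta> b)))) t)) s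
     = sb (\<lambda>a. sb (cons0 s) idth (mren f (upl \<sigma> a)))
          (compt (cons0 s) idth (\<lambda>b. (f (fst (\<theta> b)), mren_ctx f (lren_ctx Suc (snd (\<theta> b)))))) t"
    by (simp only: subst0_sb_eq mren_sb sb_sb fst_conv snd_conv)
  have e1: "(\<lambda>a. sb (cons0 s) idth (mren f (upl \<sigma> a))) = scons s (\<lambda>x. mren f (\<sigma> x))"
    apply (rule ext) subgoal for i by (cases i) (simp_all add: scons_def lren_mren[symmetric] sb_lren) done
  have e2: "compt (cons0 s) idth (\<lambda>b. (f (fst (\<theta> b)), mren_ctx f (lren_ctx Suc (snd (\<theta> b))))) = (\<lambda>b. (f (fst (\<theta> b)), mren_ctx f (snd (\<theta> b))))"
    by (rule ext) (simp add: compt_app lren_mren_ctx[symmetric] sbx_lren)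
  show ?thesis unfolding L e1 e2 ..
qed

lemma ss_mren_ctx2: "sbx Var (ssth 0 F) (mren_ctx (\<lambda>a. Suc (g a)) E) = mren_ctx (\<lambda>a. Suc (g a)) E"
proof -
  have eq: "(\<lambda>a. ssth 0 F (Suc (g a))) = renth (\<lambda>a. Suc (g a))" by (rule ext) (simp add: ssth_app renth_app)
  show ?thesis by (subst sbx_mren) (simp add: eq mren_ctx_sb_eq)
qed

lemma adequacy: "typed \<Gamma> \<Delta> t T \<Longrightarrow> valid \<Gamma> \<Delta> \<sigma> \<theta> \<Longrightarrow> sb \<sigma> \<theta> t \<in> R T"
  "typedc \<Gamma> \<Delta> c \<Longrightarrow> valid \<Gamma> \<Delta> \<sigma> \<theta> \<Longrightarrow> SNc (sbc \<sigma> \<theta> c)"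
proof (induct arbitrary: \<sigma> \<theta> and \<sigma> \<theta> rule: typed_typedc.inducts)
  case (T_Var \<Gamma> \<Delta> x) then show ?case by (simp add: valid_def)
next
  case (T_Lam S \<Gamma> \<Delta> t T)
  show ?case unfolding sb.simps
  proof (rule lam_R)
    fix f s assume s: "s \<in> R S"
    have "valid (cons_env S \<Gamma>) \<Delta> (scons s (\<lambda>x. mren f (\<sigma> x))) (\<lambda>b. (f (fst (\<theta> b)), mren_ctx f (snd (\<theta> b))))"
      using T_Lam.prems s unfolding valid_def
      by (auto simp: scons_def cons_env_def R_mren K_mren split: nat.split)
    then show "subst0 (mren f (sb (upl \<sigma>) (\<lambda>b. (fst (\<theta> b), lren_ctx Suc (snd (\<theta> b)))) t)) s \<in> R T"
      unfolding lam_eq by (rule T_Lam.hyps(2))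
  qed
next
  case (T_App \<Gamma> \<Delta> t S T s)
  have "sb \<sigma> \<theta> t \<in> R (Arr S T)" "sb \<sigma> \<theta> s \<in> R S" using T_App by blast+
  then show ?case by (simp add: app_R)
next
  case (T_Zero \<Gamma> \<Delta>) then show ?case using num_R[of 0] by simp
next
  case (T_Sc \<Gamma> \<Delta> t) then show ?case by (auto intro: sc_R)
next
  case (T_Nrec \<Gamma> \<Delta> r R s t) then show ?case by (auto intro: nrec_R)
next
  case (T_Mu \<Gamma> Rt \<Delta> c)
  show ?case unfolding sb.simps
  proof (rule mu_R)
    fix f E assume E: "E \<in> K Rt"
    let ?ss = "ssth 0 (mren_ctx Suc E)"
    let ?rn = "renth (ext f)"
    have eq: "ssubc 0 (mren_ctx Suc E) (mrenc (ext f) (sbc (\<lambda>i. mren Suc (\<sigma> i)) (thmu \<theta>) c))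
      = sbc (\<lambda>a. sb Var ?ss (sb Var ?rn (mren Suc (\<sigma> a)))) (compt Var ?ss (compt Var ?rn (thmu \<theta>))) c"
      by (simp only: ssub_sb_eq mren_sb_eq(2) sb_sb)
    have v1: "\<forall>x. (\<lambda>a. sb Var ?ss (sb Var ?rn (mren Suc (\<sigma> a)))) x \<in> R (\<Gamma> x)"
    proof
      fix x
      have "sb Var ?rn (mren Suc (\<sigma> x)) = mren Suc (mren f (\<sigma> x))"
        by (simp add: mren_sb_eq(1)[symmetric])
      then have "sb Var ?ss (sb Var ?rn (mren Suc (\<sigma> x))) = mren Suc (mren f (\<sigma> x))"
        by (metis ss_mren)
      then show "(\<lambda>a. sb Var ?ss (sb Var ?rn (mren Suc (\<sigma> a)))) x \<in> R (\<Gamma> x)"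
        using T_Mu.prems R_mren unfolding valid_def by auto
    qed
    have v2: "\<forall>b. snd (compt Var ?ss (compt Var ?rn (thmu \<theta>)) b) \<in> K (cons_env Rt \<Delta> b)"
    proof
      fix b show "snd (compt Var ?ss (compt Var ?rn (thmu \<theta>)) b) \<in> K (cons_env Rt \<Delta> b)"
      proof (cases b)
        case 0 then show ?thesis using K_mren[OF E] by (simp add: compt_app renth_app ssth_app cons_env_def)
      next
        case (Suc j)
        have "snd (\<theta> j) \<in> K (\<Delta> j)" using T_Mu.prems unfolding valid_def by auto
        then show ?thesis using Suc K_mren
          by (simp add: compt_app renth_app ssth_app cons_env_def mren_ctx_sb_eq[symmetric] ss_mren_ctx2)
      qed
    qed
    have "SNc (sbc (\<lambda>a. sb Var ?ss (sb Var ?rn (mren Suc (\<sigma> a)))) (compt Var ?ss (compt Var ?rn (thmu \<theta>))) c)"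
      by (rule T_Mu.hyps(2)) (use v1 v2 in \<open>simp add: valid_def\<close>)
    then show "SNc (ssubc 0 (mren_ctx Suc E) (mrenc (ext f) (sbc (\<lambda>i. mren Suc (\<sigma> i)) (thmu \<theta>) c)))"
      unfolding eq .
  qed
next
  case (T_Pass \<Gamma> \<Delta> t a)
  have "sb \<sigma> \<theta> t \<in> R (\<Delta> a)" using T_Pass by blast
  moreover have "snd (\<theta> a) \<in> K (\<Delta> a)" using T_Pass.prems unfolding valid_def by blast
  ultimately have "SN (fill (snd (\<theta> a)) (sb \<sigma> \<theta> t))" by (rule RD)
  then show ?case by (simp add: SN_Pass)
qed

theorem SN_typed: "typed \<Gamma> \<Delta> t \<rho> \<Longrightarrow> SN t"
proof -
  assume ty: "typed \<Gamma> \<Delta> t \<rho>"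
  define \<theta> where "\<theta> = (\<lambda>b. (b, SOME E. E \<in> K (\<Delta> b)))"
  have "valid \<Gamma> \<Delta> Var \<theta>" unfolding valid_def \<theta>_def using Var_R K_ne by (auto intro: someI_ex)
  then have "sb Var \<theta> t \<in> R \<rho>" by (rule adequacy(1)[OF ty])
  then show "SN t" by (auto dest: R_SN SN_sb_back)
qed




theorem mainTheorem13:
  assumes "typed \<Gamma> \<Delta> t \<rho>"
  shows "\<not> (\<exists>f. f 0 = t \<and> (\<forall>i. red (f i) (f (Suc i))))"
proof -
  have "SN t" using assms by (rule SN_typed)
  then have "Wellfounded.accp (\<lambda>y x. red x y) t"
    unfolding SN_def by (rule acc_image1[where g="\<lambda>x. x" and r=red and s=rd]) (rule red_rd)
  then show ?thesis by (rule acc_no_chain)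
qed

end
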